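(* Let $H$ be a finite-dimensional Hopf algebra over a field $k$, $R\subseteq H$ a Hopf subalgebra, $Q=H/R^+H$, and for $n\ge0$ let $E_n=\mathrm{End}(Q^{\otimes n})_H$, acting on $Q^{\otimes(n+m)}$ (for $m\ge0$) by $\alpha\mapsto\alpha\otimes\mathrm{id}_Q^{\otimes m}$, making $Q^{\otimes(n+m)}$ an $E_n$-$H$-bimodule. Then for every $n\in\mathbb{N}$, $Q^{\otimes(n+1)}$ is isomorphic to a direct summand of $Q^{\otimes(n+2)}$ as $E_n$-$H$-bimodules. Consequently $Q^{\otimes(n+1)}$ is isomorphic to a direct summand of $Q^{\otimes(n+m)}$ as $E_n$-$H$-bimodules for any $m\ge n+1\ge 2$. If moreover $H$ is a semisimple extension of $R$, then $Q^{\otimes n}$ is isomorphic to a direct summand of $Q^{\otimes(n+m)}$ as $E_n$-$H$-bimodules for any $m\ge n\ge0$.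
   Context: $R^+=\ker\varepsilon\cap R$; $Q=H/R^+H$ is a right $H$-module coalgebra with coproduct $\overline{h}\mapsto\overline{h_{(1)}}\otimes\overline{h_{(2)}}$ and counit $\overline{h}\mapsto\varepsilon(h)$. $Q^{\otimes n}$ is the $n$-fold tensor power in mod-$H$ (tensor over $k$, diagonal $H$-action), $Q^{\otimes 0}=k$ with trivial action. $H$ is a (right) semisimple extension of $R$ if every short exact sequence of right $H$-modules which splits as a sequence of $R$-modules splits as $H$-modules; for Hopf subalgebra pairs this is equivalent to the existence of $t\in Q$ with $th=\varepsilon(h)t$ for all $h\in H$ and $\varepsilon_Q(t)=1$. *)

theory Defs
  imports Main
begin

text \<open>A finite-dimensional Hopf algebra H over the field k is given by a finite basis
indexed by the finite type 'b; vectors of H are functions 'b => 'k.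
Structure constants: e_a e_b = sum_l hm a b l e_l; 1 = sum_a hu a e_a;
Delta(e_c) = sum_(i,j) hd c i j e_i (x) e_j; eps(e_c) = he c; S(e_a) = sum_b hS a b e_b.\<close>

record ('k, 'b) hopf =
  hm :: "'b \<Rightarrow> 'b \<Rightarrow> 'b \<Rightarrow> 'k"
  hu :: "'b \<Rightarrow> 'k"
  hd :: "'b \<Rightarrow> 'b \<Rightarrow> 'b \<Rightarrow> 'k"
  he :: "'b \<Rightarrow> 'k"
  hS :: "'b \<Rightarrow> 'b \<Rightarrow> 'k"

definition kd :: "'b \<Rightarrow> 'b \<Rightarrow> 'k::field" where
  "kd a b = (if a = b then 1 else 0)"

definition hopf_algebra :: "('k::field, 'b::finite) hopf \<Rightarrow> bool" where
  "hopf_algebra H \<longleftrightarrow>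
     \<comment> \<open>associativity\<close>
     (\<forall>a b c l. (\<Sum>p\<in>UNIV. hm H a b p * hm H p c l) = (\<Sum>p\<in>UNIV. hm H b c p * hm H a p l)) \<and>
     \<comment> \<open>unit\<close>
     (\<forall>b l. (\<Sum>a\<in>UNIV. hu H a * hm H a b l) = kd b l) \<and>
     (\<forall>b l. (\<Sum>a\<in>UNIV. hu H a * hm H b a l) = kd b l) \<and>
     \<comment> \<open>coassociativity\<close>
     (\<forall>c i j l. (\<Sum>a\<in>UNIV. hd H c a l * hd H a i j) = (\<Sum>a\<in>UNIV. hd H c i a * hd H a j l)) \<and>
     \<comment> \<open>counit\<close>
     (\<forall>c j. (\<Sum>a\<in>UNIV. hd H c a j * he H a) = kd c j) \<and>
     (\<forall>c j. (\<Sum>a\<in>UNIV. hd H c j a * he H a) = kd c j) \<and>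
     \<comment> \<open>comultiplication is an algebra map\<close>
     (\<forall>a b i j. (\<Sum>c\<in>UNIV. hm H a b c * hd H c i j) =
        (\<Sum>p\<in>UNIV. \<Sum>q\<in>UNIV. \<Sum>r\<in>UNIV. \<Sum>s\<in>UNIV.
            hd H a p q * hd H b r s * hm H p r i * hm H q s j)) \<and>
     (\<forall>i j. (\<Sum>c\<in>UNIV. hu H c * hd H c i j) = hu H i * hu H j) \<and>
     \<comment> \<open>counit is an algebra map\<close>
     (\<forall>a b. (\<Sum>c\<in>UNIV. hm H a b c * he H c) = he H a * he H b) \<and>
     (\<Sum>c\<in>UNIV. hu H c * he H c) = 1 \<and>
     \<comment> \<open>antipode\<close>
     (\<forall>c l. (\<Sum>p\<in>UNIV. \<Sum>q\<in>UNIV. hd H c p q * (\<Sum>r\<in>UNIV. hS H p r * hm H r q l))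
              = he H c * hu H l) \<and>
     (\<forall>c l. (\<Sum>p\<in>UNIV. \<Sum>q\<in>UNIV. hd H c p q * (\<Sum>r\<in>UNIV. hS H q r * hm H p r l))
              = he H c * hu H l)"

definition vadd :: "('a \<Rightarrow> 'k::field) \<Rightarrow> ('a \<Rightarrow> 'k) \<Rightarrow> ('a \<Rightarrow> 'k)" where
  "vadd x y = (\<lambda>a. x a + y a)"

definition vsub :: "('a \<Rightarrow> 'k::field) \<Rightarrow> ('a \<Rightarrow> 'k) \<Rightarrow> ('a \<Rightarrow> 'k)" where
  "vsub x y = (\<lambda>a. x a - y a)"

definition vscale :: "'k::field \<Rightarrow> ('a \<Rightarrow> 'k) \<Rightarrow> ('a \<Rightarrow> 'k)" where
  "vscale c x = (\<lambda>a. c * x a)"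

definition vspan :: "('a \<Rightarrow> 'k::field) set \<Rightarrow> ('a \<Rightarrow> 'k) set" where
  "vspan S = {x. \<exists>F c. finite F \<and> F \<subseteq> S \<and> x = (\<lambda>a. \<Sum>v\<in>F. c v * v a)}"

definition subspace_of :: "('a \<Rightarrow> 'k::field) set \<Rightarrow> bool" where
  "subspace_of V \<longleftrightarrow> (\<lambda>_. 0) \<in> V \<and> (\<forall>x\<in>V. \<forall>y\<in>V. vadd x y \<in> V) \<and> (\<forall>c. \<forall>x\<in>V. vscale c x \<in> V)"

definition lin_on :: "('a \<Rightarrow> 'k::field) set \<Rightarrow> ('c \<Rightarrow> 'k) set \<Rightarrow> (('a \<Rightarrow> 'k) \<Rightarrow> ('c \<Rightarrow> 'k)) \<Rightarrow> bool" where
  "lin_on A B f \<longleftrightarrow> f ` A \<subseteq> B \<and>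
     (\<forall>x\<in>A. \<forall>y\<in>A. f (vadd x y) = vadd (f x) (f y)) \<and>
     (\<forall>c. \<forall>x\<in>A. f (vscale c x) = vscale c (f x))"

definition hmul :: "('k::field, 'b::finite) hopf \<Rightarrow> ('b \<Rightarrow> 'k) \<Rightarrow> ('b \<Rightarrow> 'k) \<Rightarrow> ('b \<Rightarrow> 'k)" where
  "hmul H x y = (\<lambda>l. \<Sum>i\<in>UNIV. \<Sum>j\<in>UNIV. x i * y j * hm H i j l)"

definition hunit :: "('k::field, 'b::finite) hopf \<Rightarrow> ('b \<Rightarrow> 'k)" where
  "hunit H = hu H"

definition hcomul :: "('k::field, 'b::finite) hopf \<Rightarrow> ('b \<Rightarrow> 'k) \<Rightarrow> ('b \<times> 'b \<Rightarrow> 'k)" where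
  "hcomul H x = (\<lambda>(j, l). \<Sum>i\<in>UNIV. x i * hd H i j l)"

definition heps :: "('k::field, 'b::finite) hopf \<Rightarrow> ('b \<Rightarrow> 'k) \<Rightarrow> 'k" where
  "heps H x = (\<Sum>i\<in>UNIV. x i * he H i)"

definition hant :: "('k::field, 'b::finite) hopf \<Rightarrow> ('b \<Rightarrow> 'k) \<Rightarrow> ('b \<Rightarrow> 'k)" where
  "hant H x = (\<lambda>j. \<Sum>i\<in>UNIV. x i * hS H i j)"

definition tensor2 :: "('b \<Rightarrow> 'k::field) \<Rightarrow> ('b \<Rightarrow> 'k) \<Rightarrow> ('b \<times> 'b \<Rightarrow> 'k)" where
  "tensor2 x y = (\<lambda>(i, j). x i * y j)"

definition hopf_subalgebra :: "('k::field, 'b::finite) hopf \<Rightarrow> ('b \<Rightarrow> 'k) set \<Rightarrow> bool" where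
  "hopf_subalgebra H R \<longleftrightarrow> subspace_of R \<and> hunit H \<in> R \<and>
     (\<forall>x\<in>R. \<forall>y\<in>R. hmul H x y \<in> R) \<and>
     (\<forall>x\<in>R. hcomul H x \<in> vspan {tensor2 r s | r s. r \<in> R \<and> s \<in> R}) \<and>
     (\<forall>x\<in>R. hant H x \<in> R)"

text \<open>The right ideal R^+ H; Q = H / R^+ H.\<close>
definition Rplus_H :: "('k::field, 'b::finite) hopf \<Rightarrow> ('b \<Rightarrow> 'k) set \<Rightarrow> ('b \<Rightarrow> 'k) set" where
  "Rplus_H H R = vspan {hmul H r h | r h. r \<in> R \<and> heps H r = 0}"

text \<open>H^(x)n is represented as functions on words of length n (coefficients w.r.t. the
tensor basis e_(w_1) (x) ... (x) e_(w_n)), vanishing off words of length n.\<close>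
definition tpow :: "nat \<Rightarrow> ('b list \<Rightarrow> 'k::field) set" where
  "tpow n = {x. \<forall>w. length w \<noteq> n \<longrightarrow> x w = 0}"

definition words :: "nat \<Rightarrow> 'b list set" where
  "words n = {w. length w = n}"

definition tens :: "('b \<Rightarrow> 'k::field) list \<Rightarrow> ('b list \<Rightarrow> 'k)" where
  "tens hs = (\<lambda>w. if length w = length hs then (\<Prod>i<length hs. (hs ! i) (w ! i)) else 0)"

text \<open>Kernel of H^(x)n -> Q^(x)n: spanned by pure tensors with some factor in R^+ H.
Thus Q^(x)n is represented as tpow n modulo qker H R n.\<close>
definition qker :: "('k::field, 'b::finite) hopf \<Rightarrow> ('b \<Rightarrow> 'k) set \<Rightarrow> nat \<Rightarrow> ('b list \<Rightarrow> 'k) set" where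
  "qker H R n = vspan {tens hs | hs. length hs = n \<and> (\<exists>i<n. hs ! i \<in> Rplus_H H R)}"

text \<open>Iterated comultiplication Delta^(n): H -> H^(x)n, with Delta^(0) = eps,
Delta^(n+1) = (id (x) Delta^(n)) Delta.\<close>
fun cop :: "('k::field, 'b::finite) hopf \<Rightarrow> nat \<Rightarrow> 'b \<Rightarrow> 'b list \<Rightarrow> 'k" where
  "cop H 0 c w = (if w = [] then he H c else 0)"
| "cop H (Suc n) c w = (case w of [] \<Rightarrow> 0 | d # v \<Rightarrow> (\<Sum>a\<in>UNIV. hd H c d a * cop H n a v))"

text \<open>Diagonal right action of H on H^(x)n: x . h = x * Delta^(n)(h) (componentwise product).
For n = 0 this is the trivial action x . h = eps(h) x.\<close>
definition tact :: "('k::field, 'b::finite) hopf \<Rightarrow> nat \<Rightarrow> ('b list \<Rightarrow> 'k) \<Rightarrow> ('b \<Rightarrow> 'k) \<Rightarrow> ('b list \<Rightarrow> 'k)" where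
  "tact H n x h = (\<lambda>v. if length v = n then
      (\<Sum>c\<in>UNIV. h c * (\<Sum>w\<in>words n. \<Sum>u\<in>words n.
          x w * cop H n c u * (\<Prod>i<n. hm H (w ! i) (u ! i) (v ! i))))
      else 0)"

text \<open>Lifts to H^(x)n of elements of E_n: linear maps preserving the kernel whose induced
map on Q^(x)n is H-linear. Every element of E_n has such a lift.\<close>
definition endo :: "('k::field, 'b::finite) hopf \<Rightarrow> ('b \<Rightarrow> 'k) set \<Rightarrow> nat
    \<Rightarrow> (('b list \<Rightarrow> 'k) \<Rightarrow> ('b list \<Rightarrow> 'k)) \<Rightarrow> bool" where
  "endo H R n f \<longleftrightarrow> lin_on (tpow n) (tpow n) f \<and> f ` qker H R n \<subseteq> qker H R n \<and>
     (\<forall>x\<in>tpow n. \<forall>h. vsub (f (tact H n x h)) (tact H n (f x) h) \<in> qker H R n)"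

text \<open>alpha |-> alpha (x) id^(x)m on H^(x)(n+m).\<close>
definition ext_id :: "(('b list \<Rightarrow> 'k::field) \<Rightarrow> ('b list \<Rightarrow> 'k)) \<Rightarrow> nat \<Rightarrow> nat
    \<Rightarrow> ('b list \<Rightarrow> 'k) \<Rightarrow> ('b list \<Rightarrow> 'k)" where
  "ext_id f n m y = (\<lambda>v. if length v = n + m then
      f (\<lambda>u. if length u = n then y (u @ drop n v) else 0) (take n v) else 0)"

text \<open>(Lifts of) E_n-H-bimodule maps Q^(x)a -> Q^(x)b, for a, b >= n.\<close>
definition bimap :: "('k::field, 'b::finite) hopf \<Rightarrow> ('b \<Rightarrow> 'k) set \<Rightarrow> nat \<Rightarrow> nat \<Rightarrow> nat
    \<Rightarrow> (('b list \<Rightarrow> 'k) \<Rightarrow> ('b list \<Rightarrow> 'k)) \<Rightarrow> bool" where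
  "bimap H R n a b \<phi> \<longleftrightarrow> lin_on (tpow a) (tpow b) \<phi> \<and> \<phi> ` qker H R a \<subseteq> qker H R b \<and>
     (\<forall>x\<in>tpow a. \<forall>h. vsub (\<phi> (tact H a x h)) (tact H b (\<phi> x) h) \<in> qker H R b) \<and>
     (\<forall>f. endo H R n f \<longrightarrow>
        (\<forall>x\<in>tpow a. vsub (\<phi> (ext_id f n (a - n) x)) (ext_id f n (b - n) (\<phi> x)) \<in> qker H R b))"

definition bimod_summand :: "('k::field, 'b::finite) hopf \<Rightarrow> ('b \<Rightarrow> 'k) set \<Rightarrow> nat \<Rightarrow> nat \<Rightarrow> nat \<Rightarrow> bool" where
  "bimod_summand H R n a b \<longleftrightarrow> (\<exists>i p. bimap H R n a b i \<and> bimap H R n b a p \<and>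
     (\<forall>x\<in>tpow a. vsub (p (i x)) x \<in> qker H R a))"

text \<open>H is a semisimple extension of R (characterization via a normalized right
integral t in Q: t h = eps(h) t for all h, eps_Q(t) = 1).\<close>
definition semisimple_ext :: "('k::field, 'b::finite) hopf \<Rightarrow> ('b \<Rightarrow> 'k) set \<Rightarrow> bool" where
  "semisimple_ext H R \<longleftrightarrow> (\<exists>t. (\<forall>h. vsub (hmul H t h) (vscale (heps H h) t) \<in> Rplus_H H R)
      \<and> heps H t = 1)"

end

theory Submission
  imports Defs
begin


lemma finite_words[simp]: "finite (words n :: 'b::finite list set)"
  unfolding words_def using finite_lists_length_eq[of "UNIV::'b set" n] by simp

lemma words_append_image: "words (p+q) = (\<lambda>(u,w). u@w) ` (words p \<times> words q)"
proof
  show "words (p+q) \<subseteq> (\<lambda>(u,w). u@w) ` (words p \<times> words q)"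
  proof
    fix x assume "x \<in> words (p+q)"
    then have "x = (\<lambda>(u,w). u@w) (take p x, drop p x)" "(take p x, drop p x) \<in> words p \<times> words q"
      by (auto simp: words_def)
    then show "x \<in> (\<lambda>(u,w). u@w) ` (words p \<times> words q)" by blast
  qed
qed (auto simp: words_def)

lemma sum_words_append:
  "(\<Sum>w\<in>words (p+q). f w) = (\<Sum>u\<in>words p. \<Sum>w\<in>words q. (f (u@w) :: 'k::comm_monoid_add))"
proof -
  have inj: "inj_on (\<lambda>(u,w). u@w) (words p \<times> words q)"
    by (auto simp: inj_on_def words_def)
  have "(\<Sum>w\<in>words (p+q). f w) = (\<Sum>x\<in>words p \<times> words q. f ((\<lambda>(u,w). u@w) x))"
    unfolding words_append_image by (rule sum.reindex[OF inj, unfolded comp_def])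
  also have "\<dots> = (\<Sum>u\<in>words p. \<Sum>w\<in>words q. f (u@w))"
    by (simp add: sum.cartesian_product split_def)
  finally show ?thesis .
qed

lemma words0: "words 0 = {[]}" by (auto simp: words_def)

lemma words1: "words (Suc 0) = range (\<lambda>d. [d])"
  by (auto simp: words_def length_Suc_conv)

lemma sum_words1: "(\<Sum>w\<in>words (Suc 0). f w) = (\<Sum>d\<in>UNIV. (f [d] :: 'k::comm_monoid_add))"
  unfolding words1 by (subst sum.reindex) (auto simp: inj_on_def)

lemma sum_words_snoc: "(\<Sum>w\<in>words (Suc k). f w) = (\<Sum>u\<in>words k. \<Sum>d\<in>UNIV. (f (u@[d]) :: 'k::comm_monoid_add))"
  using sum_words_append[where p=k and q="Suc 0" and f=f] by (simp add: sum_words1)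

lemma sum_kd1[simp]: "(\<Sum>b\<in>(UNIV::'b::finite set). kd c b * f b) = (f c :: 'k::field)"
  by (simp add: kd_def if_distrib if_distribR cong: if_cong)
lemma sum_kd2[simp]: "(\<Sum>b\<in>(UNIV::'b::finite set). f b * kd c b) = (f c :: 'k::field)"
  by (simp add: kd_def if_distrib if_distribR cong: if_cong)
lemma sum_kd3[simp]: "(\<Sum>b\<in>(UNIV::'b::finite set). kd b c * f b) = (f c :: 'k::field)"
  by (simp add: kd_def if_distrib if_distribR cong: if_cong)
lemma sum_kd4[simp]: "(\<Sum>b\<in>(UNIV::'b::finite set). f b * kd b c) = (f c :: 'k::field)"
  by (simp add: kd_def if_distrib if_distribR cong: if_cong)

context fixes H :: "('k::field, 'b::finite) hopf" assumes HA: "hopf_algebra H"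
begin
lemma ax_coassoc: "(\<Sum>a\<in>UNIV. hd H c a l * hd H a i j) = (\<Sum>a\<in>UNIV. hd H c i a * hd H a j l)"
  using HA unfolding hopf_algebra_def by blast
lemma ax_counitL: "(\<Sum>a\<in>UNIV. hd H c a j * he H a) = kd c j"
  using HA unfolding hopf_algebra_def by blast
lemma ax_counitR: "(\<Sum>a\<in>UNIV. hd H c j a * he H a) = kd c j"
  using HA unfolding hopf_algebra_def by blast
lemma ax_mult: "(\<Sum>c\<in>UNIV. hm H a b c * hd H c i j) =
        (\<Sum>p\<in>UNIV. \<Sum>q\<in>UNIV. \<Sum>r\<in>UNIV. \<Sum>s\<in>UNIV.
            hd H a p q * hd H b r s * hm H p r i * hm H q s j)"
  using HA unfolding hopf_algebra_def by blast
lemma ax_eps_mult: "(\<Sum>c\<in>UNIV. hm H a b c * he H c) = he H a * he H b"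
  using HA unfolding hopf_algebra_def by blast
lemma ax_eps_unit: "(\<Sum>c\<in>UNIV. hu H c * he H c) = 1"
  using HA unfolding hopf_algebra_def by blast
lemma ax_unitL: "(\<Sum>a\<in>UNIV. hu H a * hm H a b l) = (kd b l :: 'k)"
  using HA unfolding hopf_algebra_def by auto
lemma ax_unitR: "(\<Sum>a\<in>UNIV. hu H a * hm H b a l) = (kd b l :: 'k)"
  using HA unfolding hopf_algebra_def by auto
end

lemma cop_len: "length w \<noteq> n \<Longrightarrow> cop H n c w = 0"
proof (induction n arbitrary: c w)
  case 0 then show ?case by simp
next
  case (Suc n) then show ?case by (cases w) auto
qed


lemma sum_rot3: "(\<Sum>x\<in>A. \<Sum>y\<in>B. \<Sum>z\<in>C. f x y z) = (\<Sum>y\<in>B. \<Sum>z\<in>C. \<Sum>x\<in>A. (f x y z :: 'k::comm_monoid_add))"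
  by (subst sum.swap, rule sum.cong[OF refl], rule sum.swap)
lemma sum_swap_in: "(\<Sum>x\<in>A. \<Sum>y\<in>B. \<Sum>z\<in>C. f x y z) = (\<Sum>x\<in>A. \<Sum>z\<in>C. \<Sum>y\<in>B. (f x y z :: 'k::comm_monoid_add))"
  by (rule sum.cong[OF refl], rule sum.swap)

lemma sum3_p1: "(\<Sum>x\<in>A. \<Sum>y\<in>B. \<Sum>z\<in>C. f x y z) = (\<Sum>x\<in>A. \<Sum>z\<in>C. \<Sum>y\<in>B. (f x y z :: 'k::comm_monoid_add))"
  by (rule sum.cong[OF refl], rule sum.swap)
lemma sum3_p2: "(\<Sum>x\<in>A. \<Sum>y\<in>B. \<Sum>z\<in>C. f x y z) = (\<Sum>y\<in>B. \<Sum>x\<in>A. \<Sum>z\<in>C. (f x y z :: 'k::comm_monoid_add))"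
  by (rule sum.swap)
lemma sum3_p3: "(\<Sum>x\<in>A. \<Sum>y\<in>B. \<Sum>z\<in>C. f x y z) = (\<Sum>y\<in>B. \<Sum>z\<in>C. \<Sum>x\<in>A. (f x y z :: 'k::comm_monoid_add))"
  by (subst sum.swap, rule sum.cong[OF refl], rule sum.swap)
lemma sum3_p4: "(\<Sum>x\<in>A. \<Sum>y\<in>B. \<Sum>z\<in>C. f x y z) = (\<Sum>z\<in>C. \<Sum>x\<in>A. \<Sum>y\<in>B. (f x y z :: 'k::comm_monoid_add))"
  by (rule trans[OF sum3_p1 sum3_p2])
lemma sum3_p5: "(\<Sum>x\<in>A. \<Sum>y\<in>B. \<Sum>z\<in>C. f x y z) = (\<Sum>z\<in>C. \<Sum>y\<in>B. \<Sum>x\<in>A. (f x y z :: 'k::comm_monoid_add))"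
  by (rule trans[OF sum3_p1 sum3_p3])
lemmas sum3_perms = sum3_p1 sum3_p2 sum3_p3 sum3_p4 sum3_p5

lemma cop_split:
  assumes HA: "hopf_algebra H"
  shows "length u = p \<Longrightarrow> cop H (p+q) c (u@w) =
     (\<Sum>a\<in>UNIV. \<Sum>b\<in>UNIV. hd H c a b * cop H p a u * cop H q b w)"
proof (induction u arbitrary: p c)
  case Nil
  then have "(\<Sum>a\<in>UNIV. \<Sum>b\<in>UNIV. hd H c a b * cop H p a [] * cop H q b w)
     = (\<Sum>b\<in>UNIV. (\<Sum>a\<in>UNIV. hd H c a b * he H a) * cop H q b w)"
    by (simp add: sum_distrib_left sum_distrib_right, subst sum.swap, simp add: mult_ac)
  also have "\<dots> = cop H q c w" by (simp add: ax_counitL[OF HA])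
  finally show ?case using Nil by simp
next
  case (Cons d u)
  then obtain p' where p: "p = Suc p'" "length u = p'" by auto
  have "cop H (p+q) c ((d#u)@w) = (\<Sum>a\<in>UNIV. hd H c d a * cop H (p'+q) a (u@w))"
    using p by simp
  also have "\<dots> = (\<Sum>a\<in>UNIV. \<Sum>a'\<in>UNIV. \<Sum>b\<in>UNIV. hd H c d a * hd H a a' b * (cop H p' a' u * cop H q b w))"
    using Cons.IH[OF p(2)] by (simp add: sum_distrib_left mult.assoc)
  also have "\<dots> = (\<Sum>a'\<in>UNIV. \<Sum>b\<in>UNIV. \<Sum>a\<in>UNIV. hd H c d a * hd H a a' b * (cop H p' a' u * cop H q b w))"
    by (rule sum_rot3)
  also have "\<dots> = (\<Sum>a'\<in>UNIV. \<Sum>b\<in>UNIV. (\<Sum>a\<in>UNIV. hd H c d a * hd H a a' b) * (cop H p' a' u * cop H q b w))"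
    by (simp add: sum_distrib_right)
  also have "\<dots> = (\<Sum>a'\<in>UNIV. \<Sum>b\<in>UNIV. (\<Sum>a\<in>UNIV. hd H c a b * hd H a d a') * (cop H p' a' u * cop H q b w))"
    by (simp add: ax_coassoc[OF HA])
  also have "\<dots> = (\<Sum>a'\<in>UNIV. \<Sum>b\<in>UNIV. \<Sum>a\<in>UNIV. hd H c a b * hd H a d a' * (cop H p' a' u * cop H q b w))"
    by (simp add: sum_distrib_right)
  also have "\<dots> = (\<Sum>a'\<in>UNIV. \<Sum>a\<in>UNIV. \<Sum>b\<in>UNIV. hd H c a b * hd H a d a' * (cop H p' a' u * cop H q b w))"
    by (rule sum_swap_in)
  also have "\<dots> = (\<Sum>a\<in>UNIV. \<Sum>b\<in>UNIV. \<Sum>a'\<in>UNIV. hd H c a b * hd H a d a' * (cop H p' a' u * cop H q b w))"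
    by (rule sum_rot3)
  also have "\<dots> = (\<Sum>a\<in>UNIV. \<Sum>b\<in>UNIV. hd H c a b * cop H p a (d#u) * cop H q b w)"
    using p by (simp add: sum_distrib_left sum_distrib_right mult_ac)
  finally show ?case .
qed


lemma sum_swap22: "(\<Sum>x\<in>A. \<Sum>y\<in>B. \<Sum>z\<in>C. \<Sum>w\<in>D. f x y z w) = (\<Sum>z\<in>C. \<Sum>w\<in>D. \<Sum>x\<in>A. \<Sum>y\<in>B. (f x y z w :: 'k::comm_monoid_add))"
proof -
  have "(\<Sum>x\<in>A. \<Sum>y\<in>B. \<Sum>z\<in>C. \<Sum>w\<in>D. f x y z w) = (\<Sum>x\<in>A. \<Sum>z\<in>C. \<Sum>y\<in>B. \<Sum>w\<in>D. f x y z w)"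
    by (rule sum.cong[OF refl], rule sum.swap)
  also have "\<dots> = (\<Sum>x\<in>A. \<Sum>z\<in>C. \<Sum>w\<in>D. \<Sum>y\<in>B. f x y z w)"
    by (rule sum.cong[OF refl], rule sum.cong[OF refl], rule sum.swap)
  also have "\<dots> = (\<Sum>z\<in>C. \<Sum>x\<in>A. \<Sum>w\<in>D. \<Sum>y\<in>B. f x y z w)"
    by (rule sum.swap)
  also have "\<dots> = (\<Sum>z\<in>C. \<Sum>w\<in>D. \<Sum>x\<in>A. \<Sum>y\<in>B. f x y z w)"
    by (rule sum.cong[OF refl], rule sum.swap)
  finally show ?thesis .
qed

lemma prod_lessThan_add: "(\<Prod>i<(p::nat)+q. g i) = (\<Prod>i<p. g i) * (\<Prod>i<q. (g (p+i) :: 'k::comm_monoid_mult))"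
  by (induction q) (simp_all add: mult_ac)

definition Tm :: "('k::field, 'b::finite) hopf \<Rightarrow> nat \<Rightarrow> 'b \<Rightarrow> 'b list \<Rightarrow> 'b list \<Rightarrow> 'k" where
  "Tm H k c w v = (\<Sum>u\<in>words k. cop H k c u * (\<Prod>i<k. hm H (w!i) (u!i) (v!i)))"

lemma Tm_split:
  assumes HA: "hopf_algebra H" and l: "length w1 = p" "length v1 = p" "length w2 = q" "length v2 = q"
  shows "Tm H (p+q) c (w1@w2) (v1@v2) = (\<Sum>a\<in>UNIV. \<Sum>b\<in>UNIV. hd H c a b * Tm H p a w1 v1 * Tm H q b w2 v2)"
proof -
  have P: "(\<Prod>i<p+q. hm H ((w1@w2)!i) ((u1@u2)!i) ((v1@v2)!i)) =
       (\<Prod>i<p. hm H (w1!i) (u1!i) (v1!i)) * (\<Prod>i<q. hm H (w2!i) (u2!i) (v2!i))"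
    if "u1 \<in> words p" for u1 u2
    using that l by (simp add: prod_lessThan_add nth_append words_def)
  have "Tm H (p+q) c (w1@w2) (v1@v2) = (\<Sum>u1\<in>words p. \<Sum>u2\<in>words q.
      (\<Sum>a\<in>UNIV. \<Sum>b\<in>UNIV. hd H c a b * cop H p a u1 * cop H q b u2) *
      ((\<Prod>i<p. hm H (w1!i) (u1!i) (v1!i)) * (\<Prod>i<q. hm H (w2!i) (u2!i) (v2!i))))"
    unfolding Tm_def sum_words_append
    by (rule sum.cong[OF refl], rule sum.cong[OF refl]) (simp add: P cop_split[OF HA] words_def)
  also have "\<dots> = (\<Sum>u1\<in>words p. \<Sum>u2\<in>words q. \<Sum>a\<in>UNIV. \<Sum>b\<in>UNIV.
      hd H c a b * (cop H p a u1 * (\<Prod>i<p. hm H (w1!i) (u1!i) (v1!i))) * (cop H q b u2 * (\<Prod>i<q. hm H (w2!i) (u2!i) (v2!i))))"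
    apply (simp add: sum_distrib_left sum_distrib_right)
    apply (simp add: mult_ac)
    done
  also have "\<dots> = (\<Sum>a\<in>UNIV. \<Sum>b\<in>UNIV. \<Sum>u1\<in>words p. \<Sum>u2\<in>words q.
      hd H c a b * (cop H p a u1 * (\<Prod>i<p. hm H (w1!i) (u1!i) (v1!i))) * (cop H q b u2 * (\<Prod>i<q. hm H (w2!i) (u2!i) (v2!i))))"
    by (rule sum_swap22)
  also have "\<dots> = (\<Sum>a\<in>UNIV. \<Sum>b\<in>UNIV. hd H c a b * Tm H p a w1 v1 * Tm H q b w2 v2)"
    unfolding Tm_def
    by (simp add: sum_distrib_left sum_distrib_right, rule sum.cong[OF refl], rule sum.cong[OF refl], rule sum.swap)
  finally show ?thesis .
qed

lemma Tm0: "Tm H 0 c [] [] = he H c"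
  by (simp add: Tm_def words0)

lemma Tm1: "hopf_algebra H \<Longrightarrow> Tm H (Suc 0) c [b] [a] = hm H b c a"
  by (simp add: Tm_def sum_words1 ax_counitR)

lemma tact_Tm: "length v = k \<Longrightarrow> tact H k x h v = (\<Sum>c\<in>UNIV. h c * (\<Sum>w\<in>words k. x w * Tm H k c w v))"
  unfolding tact_def Tm_def by (simp add: sum_distrib_left mult_ac)



lemma subspace_zero: "subspace_of V \<Longrightarrow> (\<lambda>_. 0) \<in> V"
  by (simp add: subspace_of_def)
lemma subspace_add: "subspace_of V \<Longrightarrow> x \<in> V \<Longrightarrow> y \<in> V \<Longrightarrow> (\<lambda>a. x a + y a) \<in> V"
  unfolding subspace_of_def vadd_def by blast
lemma subspace_scale: "subspace_of V \<Longrightarrow> x \<in> V \<Longrightarrow> (\<lambda>a. c * x a) \<in> V"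
  unfolding subspace_of_def vscale_def by blast
lemma subspace_sub: "subspace_of V \<Longrightarrow> x \<in> V \<Longrightarrow> y \<in> V \<Longrightarrow> vsub x y \<in> V"
proof -
  assume V: "subspace_of V" and x: "x \<in> V" and y: "y \<in> V"
  have "(\<lambda>a. (-1) * y a) \<in> V" by (rule subspace_scale[OF V y])
  from subspace_add[OF V x this] show ?thesis by (simp add: vsub_def)
qed
lemma subspace_sum: assumes V: "subspace_of V" and fin: "finite A" shows "(\<And>a. a \<in> A \<Longrightarrow> g a \<in> V) \<Longrightarrow> (\<lambda>x. \<Sum>a\<in>A. g a x) \<in> V"
  using fin
proof (induction A rule: finite_induct)
  case empty then show ?case by (simp add: subspace_zero[OF V])
next
  case (insert a A)
  then show ?case using subspace_add[OF V, of "g a" "\<lambda>x. \<Sum>a\<in>A. g a x"] by simp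
qed
lemma subspace_sum_scale: "subspace_of V \<Longrightarrow> finite A \<Longrightarrow> (\<And>a. a \<in> A \<Longrightarrow> g a \<in> V) \<Longrightarrow> (\<lambda>x. \<Sum>a\<in>A. c a * g a x) \<in> V"
  using subspace_sum[of V A "\<lambda>a x. c a * g a x"] subspace_scale by blast

lemma vspan_subspace: "subspace_of (vspan S)"
  unfolding subspace_of_def
proof (intro conjI ballI allI)
  show "(\<lambda>_. 0) \<in> vspan S" unfolding vspan_def by (rule CollectI, rule exI[of _ "{}"], rule exI[of _ "\<lambda>_. 0"]) simp
next
  fix x y assume "x \<in> vspan S" "y \<in> vspan S"
  then obtain F c G d where F: "finite F" "F \<subseteq> S" "x = (\<lambda>a. \<Sum>v\<in>F. c v * v a)"
    and G: "finite G" "G \<subseteq> S" "y = (\<lambda>a. \<Sum>v\<in>G. d v * v a)" unfolding vspan_def by blast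
  let ?c = "\<lambda>v. (if v \<in> F then c v else 0) + (if v \<in> G then d v else 0)"
  have eq: "vadd x y = (\<lambda>a. \<Sum>v\<in>F \<union> G. ?c v * v a)"
  proof
    fix a
    have e: "?c v * v a = (if v \<in> F then c v * v a else 0) + (if v \<in> G then d v * v a else 0)" for v
      by (simp add: distrib_right)
    have "(\<Sum>v\<in>F \<union> G. ?c v * v a) = (\<Sum>v\<in>F \<union> G. (if v \<in> F then c v * v a else 0)) + (\<Sum>v\<in>F \<union> G. (if v \<in> G then d v * v a else 0))"
      unfolding e by (rule sum.distrib)
    also have "\<dots> = (\<Sum>v\<in>(F \<union> G) \<inter> F. c v * v a) + (\<Sum>v\<in>(F \<union> G) \<inter> G. d v * v a)"
      using F G by (simp only: sum.inter_restrict[symmetric] finite_Un)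
    also have "\<dots> = (\<Sum>v\<in>F. c v * v a) + (\<Sum>v\<in>G. d v * v a)"
      by (simp add: Int_absorb1 Int_absorb2)
    finally show "vadd x y a = (\<Sum>v\<in>F \<union> G. ?c v * v a)" using F G by (simp add: vadd_def)
  qed
  show "vadd x y \<in> vspan S" unfolding vspan_def
    by (rule CollectI, intro exI[of _ "F \<union> G"] exI[of _ ?c]) (use F G eq in simp)
next
  fix k x assume "x \<in> vspan S"
  then obtain F c where F: "finite F" "F \<subseteq> S" "x = (\<lambda>a. \<Sum>v\<in>F. c v * v a)" unfolding vspan_def by blast
  have eq: "vscale k x = (\<lambda>a. \<Sum>v\<in>F. (k * c v) * v a)" using F by (simp add: vscale_def sum_distrib_left mult_ac)
  show "vscale k x \<in> vspan S" unfolding vspan_def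
    by (rule CollectI, intro exI[of _ "F"] exI[of _ "\<lambda>v. k * c v"]) (use F eq in simp)
qed

lemma vspan_superset: "x \<in> S \<Longrightarrow> x \<in> vspan S"
  unfolding vspan_def by (rule CollectI, rule exI[of _ "{x}"], rule exI[of _ "\<lambda>_. 1"]) auto

lemma vspan_induct_sub:
  assumes "x \<in> vspan S" "subspace_of V" "S \<subseteq> V"
  shows "x \<in> V"
proof -
  obtain F c where F: "finite F" "F \<subseteq> S" "x = (\<lambda>a. \<Sum>v\<in>F. c v * v a)" using assms(1) unfolding vspan_def by blast
  show ?thesis unfolding F(3) by (rule subspace_sum_scale[OF assms(2) F(1)]) (use F assms in auto)
qed

lemma tpow_subspace: "subspace_of (tpow n)"
  unfolding subspace_of_def tpow_def vadd_def vscale_def by auto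

lemma qker_subspace: "subspace_of (qker H R n)"
  unfolding qker_def by (rule vspan_subspace)

lemma qker_tpow: "qker H R n \<subseteq> tpow n"
  unfolding qker_def
  by (rule subsetI, rule vspan_induct_sub[OF _ tpow_subspace]) (auto simp: tpow_def tens_def)

lemma lin_zero: assumes f: "lin_on A B f" and z: "(\<lambda>_. 0) \<in> A" shows "f (\<lambda>_. 0) = (\<lambda>_. 0)"
proof -
  have "f (vscale 0 (\<lambda>_. 0)) = vscale 0 (f (\<lambda>_. 0))" using f z unfolding lin_on_def by blast
  then show ?thesis by (simp add: vscale_def)
qed

lemma lin_sum:
  assumes "lin_on A B f" "subspace_of A" "finite F" "\<And>v. v \<in> F \<Longrightarrow> g v \<in> A"
  shows "f (\<lambda>x. \<Sum>v\<in>F. g v x) = (\<lambda>y. \<Sum>v\<in>F. f (g v) y)"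
  using assms(3,4)
proof (induction F rule: finite_induct)
  case empty then show ?case using lin_zero[OF assms(1) subspace_zero[OF assms(2)]] by simp
next
  case (insert a F)
  have s: "(\<lambda>x. \<Sum>v\<in>F. g v x) \<in> A" using subspace_sum[OF assms(2) insert(1)] insert by auto
  have "f (\<lambda>x. \<Sum>v\<in>insert a F. g v x) = f (vadd (g a) (\<lambda>x. \<Sum>v\<in>F. g v x))"
    using insert by (simp add: vadd_def)
  also have "\<dots> = vadd (f (g a)) (f (\<lambda>x. \<Sum>v\<in>F. g v x))"
    using assms(1) s insert unfolding lin_on_def by auto
  finally show ?case using insert by (simp add: vadd_def)
qed

lemma lin_scale: "lin_on A B f \<Longrightarrow> x \<in> A \<Longrightarrow> f (\<lambda>a. c * x a) = (\<lambda>a. c * f x a)"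
  unfolding lin_on_def vscale_def by auto

lemma lin_sum_scale:
  assumes "lin_on A B f" "subspace_of A" "finite F" "\<And>v. v \<in> F \<Longrightarrow> g v \<in> A"
  shows "f (\<lambda>x. \<Sum>v\<in>F. c v * g v x) = (\<lambda>y. \<Sum>v\<in>F. c v * f (g v) y)"
  using lin_sum[OF assms(1,2,3), of "\<lambda>v x. c v * g v x"] lin_scale[OF assms(1)] assms(4)
    subspace_scale[OF assms(2)] by simp

lemma lin_vsub: "lin_on A B f \<Longrightarrow> subspace_of A \<Longrightarrow> x \<in> A \<Longrightarrow> y \<in> A \<Longrightarrow> f (vsub x y) = vsub (f x) (f y)"
proof -
  assume f: "lin_on A B f" and A: "subspace_of A" and x: "x \<in> A" and y: "y \<in> A"
  have ys: "(\<lambda>a. (-1) * y a) \<in> A" by (rule subspace_scale[OF A y])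
  have "vsub x y = vadd x (\<lambda>a. (-1) * y a)" by (simp add: vsub_def vadd_def)
  then have "f (vsub x y) = vadd (f x) (f (\<lambda>a. (-1) * y a))" using f x ys unfolding lin_on_def by auto
  then show ?thesis using lin_scale[OF f y, of "-1"] by (simp add: vsub_def vadd_def)
qed

lemma lin_in: "lin_on A B f \<Longrightarrow> x \<in> A \<Longrightarrow> f x \<in> B"
  unfolding lin_on_def by auto

lemma lin_vspan:
  assumes f: "lin_on A B f" and A: "subspace_of A" and SA: "S \<subseteq> A" and V: "subspace_of V"
    and fS: "\<And>s. s \<in> S \<Longrightarrow> f s \<in> V" and x: "x \<in> vspan S"
  shows "f x \<in> V"
proof -
  obtain F c where F: "finite F" "F \<subseteq> S" "x = (\<lambda>a. \<Sum>v\<in>F. c v * v a)" using x unfolding vspan_def by blast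
  have FA: "\<And>v. v \<in> F \<Longrightarrow> v \<in> A" using F(2) SA by blast
  have "f x = (\<lambda>y. \<Sum>v\<in>F. c v * f v y)" unfolding F(3)
    using lin_sum_scale[OF f A F(1), where g="\<lambda>v. v" and c=c] FA by simp
  also have "\<dots> \<in> V" using subspace_sum_scale[OF V F(1), where g=f and c=c] F(2) fS by blast
  finally show ?thesis .
qed



lemma vsub_self[simp]: "vsub x x = (\<lambda>_. 0)" by (simp add: vsub_def)

lemma tact_tpow: "tact H n x h \<in> tpow n" by (simp add: tact_def tpow_def)
lemma ext_id_tpow: "ext_id f n m y \<in> tpow (n+m)" by (simp add: ext_id_def tpow_def)

lemma trans_mod:
  assumes psi: "lin_on (tpow b) (tpow c) \<psi>" and pq: "\<psi> ` qker H R b \<subseteq> qker H R c"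
    and u: "u \<in> tpow b" and w: "w \<in> tpow b" and uw: "vsub u w \<in> qker H R b"
    and wz: "vsub (\<psi> w) z \<in> qker H R c"
  shows "vsub (\<psi> u) z \<in> qker H R c"
proof -
  have e: "\<psi> (vsub u w) = vsub (\<psi> u) (\<psi> w)" by (rule lin_vsub[OF psi tpow_subspace u w])
  have "\<psi> (vsub u w) \<in> qker H R c" using pq uw by blast
  then have "(\<lambda>a. vsub (\<psi> u) (\<psi> w) a + vsub (\<psi> w) z a) \<in> qker H R c"
    using subspace_add[OF qker_subspace _ wz] e by simp
  then show ?thesis by (simp add: vsub_def)
qed

lemma bimap_comp:
  fixes H :: "('k::field,'b::finite) hopf"
  assumes f: "bimap H R n a b \<phi>" and g: "bimap H R n b c \<psi>" and na: "n \<le> a" and nb: "n \<le> b"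
  shows "bimap H R n a c (\<lambda>x. \<psi> (\<phi> x))"
proof -
  have fl: "lin_on (tpow a) (tpow b) \<phi>" and fq: "\<phi> ` qker H R a \<subseteq> qker H R b"
    and fh: "\<And>x h. x \<in> tpow a \<Longrightarrow> vsub (\<phi> (tact H a x h)) (tact H b (\<phi> x) h) \<in> qker H R b"
    and fe: "\<And>f x. endo H R n f \<Longrightarrow> x \<in> tpow a \<Longrightarrow> vsub (\<phi> (ext_id f n (a - n) x)) (ext_id f n (b - n) (\<phi> x)) \<in> qker H R b"
    using f unfolding bimap_def by blast+
  have gl: "lin_on (tpow b) (tpow c) \<psi>" and gq: "\<psi> ` qker H R b \<subseteq> qker H R c"
    and gh: "\<And>x h. x \<in> tpow b \<Longrightarrow> vsub (\<psi> (tact H b x h)) (tact H c (\<psi> x) h) \<in> qker H R c"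
    and ge: "\<And>f x. endo H R n f \<Longrightarrow> x \<in> tpow b \<Longrightarrow> vsub (\<psi> (ext_id f n (b - n) x)) (ext_id f n (c - n) (\<psi> x)) \<in> qker H R c"
    using g unfolding bimap_def by blast+
  have lin: "lin_on (tpow a) (tpow c) (\<lambda>x. \<psi> (\<phi> x))"
    unfolding lin_on_def
  proof (intro conjI ballI allI)
    show "(\<lambda>x. \<psi> (\<phi> x)) ` tpow a \<subseteq> tpow c" using lin_in[OF fl] lin_in[OF gl] by blast
  next
    fix x y :: "'b list \<Rightarrow> 'k" assume x: "x \<in> tpow a" and y: "y \<in> tpow a"
    have "\<phi> (vadd x y) = vadd (\<phi> x) (\<phi> y)" using fl x y unfolding lin_on_def by blast
    then show "\<psi> (\<phi> (vadd x y)) = vadd (\<psi> (\<phi> x)) (\<psi> (\<phi> y))"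
      using gl lin_in[OF fl x] lin_in[OF fl y] unfolding lin_on_def by simp
  next
    fix k and x :: "'b list \<Rightarrow> 'k" assume x: "x \<in> tpow a"
    have "\<phi> (vscale k x) = vscale k (\<phi> x)" using fl x unfolding lin_on_def by blast
    then show "\<psi> (\<phi> (vscale k x)) = vscale k (\<psi> (\<phi> x))"
      using gl lin_in[OF fl x] unfolding lin_on_def by simp
  qed
  have q: "(\<lambda>x. \<psi> (\<phi> x)) ` qker H R a \<subseteq> qker H R c" using fq gq by blast
  have h: "vsub (\<psi> (\<phi> (tact H a x h))) (tact H c (\<psi> (\<phi> x)) h) \<in> qker H R c" if x: "x \<in> tpow a" for x h
    by (rule trans_mod[OF gl gq lin_in[OF fl tact_tpow] tact_tpow fh[OF x] gh[OF lin_in[OF fl x]]])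
  have e: "vsub (\<psi> (\<phi> (ext_id f n (a - n) x))) (ext_id f n (c - n) (\<psi> (\<phi> x))) \<in> qker H R c"
    if en: "endo H R n f" and x: "x \<in> tpow a" for f x
  proof -
    have t1: "ext_id f n (a - n) x \<in> tpow a" using ext_id_tpow[of f n "a-n" x] na by simp
    have t2: "ext_id f n (b - n) (\<phi> x) \<in> tpow b" using ext_id_tpow[of f n "b-n" "\<phi> x"] nb by simp
    show ?thesis
      by (rule trans_mod[OF gl gq lin_in[OF fl t1] t2 fe[OF en x] ge[OF en lin_in[OF fl x]]])
  qed
  show ?thesis unfolding bimap_def using lin q h e by blast
qed

lemma bimap_id: "bimap H R n a a (\<lambda>x. x)"
  unfolding bimap_def lin_on_def by (auto simp: subspace_zero[OF qker_subspace])

lemma summand_refl: "bimod_summand H R n a a"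
  unfolding bimod_summand_def
  by (intro exI[of _ "\<lambda>x. x"] conjI bimap_id) (simp add: subspace_zero[OF qker_subspace])

lemma summand_trans:
  assumes "bimod_summand H R n a b" "bimod_summand H R n b c" "n \<le> a" "n \<le> b" and c: "n \<le> c"
  shows "bimod_summand H R n a c"
proof -
  obtain i1 p1 where 1: "bimap H R n a b i1" "bimap H R n b a p1" "\<And>x. x \<in> tpow a \<Longrightarrow> vsub (p1 (i1 x)) x \<in> qker H R a"
    using assms(1) unfolding bimod_summand_def by blast
  obtain i2 p2 where 2: "bimap H R n b c i2" "bimap H R n c b p2" "\<And>x. x \<in> tpow b \<Longrightarrow> vsub (p2 (i2 x)) x \<in> qker H R b"
    using assms(2) unfolding bimod_summand_def by blast
  have i: "bimap H R n a c (\<lambda>x. i2 (i1 x))" by (rule bimap_comp[OF 1(1) 2(1) assms(3,4)])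
  have p: "bimap H R n c a (\<lambda>x. p1 (p2 x))" by (rule bimap_comp[OF 2(2) 1(2) c assms(4)])
  have p1l: "lin_on (tpow b) (tpow a) p1" and p1q: "p1 ` qker H R b \<subseteq> qker H R a"
    using 1(2) unfolding bimap_def by blast+
  have i1l: "lin_on (tpow a) (tpow b) i1" using 1(1) unfolding bimap_def by blast
  have i2l: "lin_on (tpow b) (tpow c) i2" using 2(1) unfolding bimap_def by blast
  have p2l: "lin_on (tpow c) (tpow b) p2" using 2(2) unfolding bimap_def by blast
  have "vsub (p1 (p2 (i2 (i1 x)))) x \<in> qker H R a" if x: "x \<in> tpow a" for x
    by (rule trans_mod[OF p1l p1q lin_in[OF p2l lin_in[OF i2l lin_in[OF i1l x]]] lin_in[OF i1l x] 2(3)[OF lin_in[OF i1l x]] 1(3)[OF x]])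
  then show ?thesis unfolding bimod_summand_def using i p by blast
qed



lemma Rplus_subspace: "subspace_of (Rplus_H H R)"
  unfolding Rplus_H_def by (rule vspan_subspace)

lemma tens_in_qker: "length hs = n \<Longrightarrow> i < n \<Longrightarrow> hs ! i \<in> Rplus_H H R \<Longrightarrow> tens hs \<in> qker H R n"
  unfolding qker_def by (rule vspan_superset) blast

lemma qker_slice:
  fixes F :: "'b::finite list \<Rightarrow> 'k::field"
  assumes F: "F \<in> tpow n" and i: "i < n"
    and sl: "\<And>v. length v = n \<Longrightarrow> (\<lambda>a. F (v[i:=a])) \<in> Rplus_H H R"
  shows "F \<in> qker H R n"
proof -
  define z0 :: 'b where "z0 = undefined"
  define V where "V = {v \<in> words n. v!i = z0}"
  define hs where "hs v = (map (\<lambda>b. kd b) v)[i := (\<lambda>a. F (v[i:=a]))]" for v :: "'b list"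
  have finV: "finite V" unfolding V_def by simp
  have mem: "tens (hs v) \<in> qker H R n" if "v \<in> V" for v
    using that i sl[of v] by (intro tens_in_qker[of _ n i]) (auto simp: V_def words_def hs_def)
  have eq: "F = (\<lambda>x. \<Sum>v\<in>V. tens (hs v) x)"
  proof
    fix x
    show "F x = (\<Sum>v\<in>V. tens (hs v) x)"
    proof (cases "length x = n")
      case False
      have "F x = 0" using F False by (simp add: tpow_def)
      moreover have "(\<Sum>v\<in>V. tens (hs v) x) = 0"
        by (rule sum.neutral) (use False in \<open>auto simp: V_def words_def tens_def hs_def\<close>)
      ultimately show ?thesis by simp
    next
      case True
      define v0 where "v0 = x[i:=z0]"
      have v0V: "v0 \<in> V" using True i by (simp add: V_def v0_def words_def)
      have t: "tens (hs v) x = (if v = v0 then F x else 0)" if vV: "v \<in> V" for v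
      proof (cases "v = v0")
        case True
        have lv: "length v = n" using vV by (simp add: V_def words_def)
        have "v[i := x!i] = x" using True \<open>length x = n\<close> by (simp add: v0_def)
        then have "tens (hs v) x = (\<Prod>j<n. if j = i then F x else 1)"
          unfolding tens_def hs_def using lv \<open>length x = n\<close> True i
          by (intro if_P[THEN trans] prod.cong) (auto simp: v0_def kd_def nth_list_update)
        also have "\<dots> = F x" using i by (simp add: prod.delta)
        finally show ?thesis using True by simp
      next
        case False
        have lv: "length v = n" and vi: "v!i = z0" using vV by (auto simp: V_def words_def)
        obtain j where j: "j < n" "j \<noteq> i" "v!j \<noteq> x!j"
        proof -
          have "\<exists>j<n. j \<noteq> i \<and> v!j \<noteq> x!j"
          proof (rule ccontr)
            assume "\<not> ?thesis"
            then have "v = v0" using lv \<open>length x = n\<close> vi i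
              by (intro nth_equalityI) (auto simp: v0_def nth_list_update)
            then show False using False by simp
          qed
          then show ?thesis using that by blast
        qed
        have "tens (hs v) x = (\<Prod>l<n. (hs v ! l) (x ! l))"
          unfolding tens_def hs_def using lv \<open>length x = n\<close> by simp
        also have "\<dots> = 0"
          using j lv by (intro prod_zero[of "{..<n}"]) (auto simp: hs_def kd_def intro!: bexI[of _ j])
        finally show ?thesis using False by simp
      qed
      have "(\<Sum>v\<in>V. tens (hs v) x) = (\<Sum>v\<in>V. if v = v0 then F x else 0)"
        by (rule sum.cong) (simp_all add: t)
      also have "\<dots> = F x" using finV v0V by (simp add: sum.delta)
      finally show ?thesis by simp
    qed
  qed
  show ?thesis unfolding eq by (rule subspace_sum[OF qker_subspace finV mem])
qed

lemma heps_Rplus: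
  assumes HA: "hopf_algebra H" and k: "k \<in> Rplus_H H R"
  shows "heps H k = 0"
proof -
  have sub: "subspace_of {x. heps H x = 0}"
    unfolding subspace_of_def heps_def vadd_def vscale_def
    by (simp add: distrib_right sum.distrib mult.assoc flip: sum_distrib_left)
  have gen: "heps H (hmul H r h) = heps H r * heps H h" for r h
  proof -
    have "heps H (hmul H r h) = (\<Sum>i\<in>UNIV. \<Sum>j\<in>UNIV. r i * h j * (\<Sum>l\<in>UNIV. hm H i j l * he H l))"
      unfolding heps_def hmul_def
      by (simp add: sum_distrib_left sum_distrib_right mult.assoc, subst sum.swap, rule sum.cong[OF refl], subst sum.swap, simp)
    also have "\<dots> = heps H r * heps H h"
      unfolding ax_eps_mult[OF HA] heps_def by (simp add: sum_distrib_left sum_distrib_right mult_ac)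
    finally show ?thesis .
  qed
  have "k \<in> {x. heps H x = 0}"
    using k unfolding Rplus_H_def by (rule vspan_induct_sub[OF _ sub]) (auto simp: gen)
  then show ?thesis by simp
qed

lemma tens_snoc: "length hs = k \<Longrightarrow> length w = k \<Longrightarrow> tens (hs @ [g]) (w @ [c]) = tens hs w * g c"
  by (simp add: tens_def nth_append)

lemma prod_upd:
  assumes "i < j" "j \<le> length w"
  shows "(\<Prod>l<j. f l ((w[i:=a])!l)) = (\<Prod>l\<in>{..<j}-{i}. f l (w!l)) * f i a"
proof -
  have "(\<Prod>l<j. f l ((w[i:=a])!l)) = f i ((w[i:=a])!i) * (\<Prod>l\<in>{..<j}-{i}. f l ((w[i:=a])!l))"
    using assms by (intro prod.remove) auto
  also have "\<dots> = f i a * (\<Prod>l\<in>{..<j}-{i}. f l (w!l))"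
    using assms by (auto intro!: prod.cong)
  finally show ?thesis by (simp add: mult.commute)
qed

definition K2 :: "('k::field, 'b::finite) hopf \<Rightarrow> ('b \<Rightarrow> 'k) set \<Rightarrow> ('b \<times> 'b \<Rightarrow> 'k) set" where
  "K2 H R = vspan {tensor2 X Y | X Y. X \<in> Rplus_H H R \<or> Y \<in> Rplus_H H R}"

lemma UNIV_subspace: "subspace_of UNIV" by (simp add: subspace_of_def)

lemma qker_ext2:
  fixes A :: "'b::finite list \<Rightarrow> 'k::field"
  assumes A: "A \<in> tpow j" and G: "G \<in> K2 H R"
  shows "(\<lambda>v. if length v = Suc (Suc j) then A (take j v) * G (v!j, v!Suc j) else 0) \<in> qker H R (Suc (Suc j))"
proof -
  define \<Phi> where "\<Phi> G = (\<lambda>v. if length v = Suc (Suc j) then A (take j v) * G (v!j, v!Suc j) else 0)" for G :: "'b \<times> 'b \<Rightarrow> 'k"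
  have lin: "lin_on UNIV UNIV \<Phi>" unfolding lin_on_def \<Phi>_def vadd_def vscale_def
    by (auto simp: fun_eq_iff algebra_simps)
  have gen: "\<Phi> s \<in> qker H R (Suc (Suc j))" if s: "s \<in> {tensor2 X Y | X Y. X \<in> Rplus_H H R \<or> Y \<in> Rplus_H H R}" for s
  proof -
    obtain X Y where s: "s = tensor2 X Y" and XY: "X \<in> Rplus_H H R \<or> Y \<in> Rplus_H H R" using s by blast
    have tp: "\<Phi> s \<in> tpow (Suc (Suc j))" by (simp add: \<Phi>_def tpow_def)
    show ?thesis
    proof (cases "X \<in> Rplus_H H R")
      case True
      show ?thesis
      proof (rule qker_slice[OF tp, of j])
        fix v :: "'b list" assume v: "length v = Suc (Suc j)"
        have "(\<lambda>a. \<Phi> s (v[j:=a])) = (\<lambda>a. (A (take j v) * Y (v!Suc j)) * X a)"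
          using v by (auto simp: \<Phi>_def s tensor2_def nth_list_update fun_eq_iff)
        then show "(\<lambda>a. \<Phi> s (v[j:=a])) \<in> Rplus_H H R" using subspace_scale[OF Rplus_subspace True] by simp
      qed simp
    next
      case False
      then have Y: "Y \<in> Rplus_H H R" using XY by blast
      show ?thesis
      proof (rule qker_slice[OF tp, of "Suc j"])
        fix v :: "'b list" assume v: "length v = Suc (Suc j)"
        have "(\<lambda>a. \<Phi> s (v[Suc j:=a])) = (\<lambda>a. (A (take j v) * X (v!j)) * Y a)"
          using v by (auto simp: \<Phi>_def s tensor2_def nth_list_update fun_eq_iff)
        then show "(\<lambda>a. \<Phi> s (v[Suc j:=a])) \<in> Rplus_H H R" using subspace_scale[OF Rplus_subspace Y] by simp
      qed simp
    qed
  qed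
  have "\<Phi> G \<in> qker H R (Suc (Suc j))"
    by (rule lin_vspan[OF lin UNIV_subspace _ qker_subspace gen]) (use G in \<open>auto simp: K2_def\<close>)
  then show ?thesis by (simp add: \<Phi>_def)
qed



definition WW :: "('k::field, 'b::finite) hopf \<Rightarrow> 'b \<Rightarrow> 'b \<Rightarrow> 'b \<Rightarrow> 'b \<Rightarrow> 'b \<Rightarrow> 'k" where
  "WW H b p q i j = (\<Sum>r\<in>UNIV. \<Sum>s\<in>UNIV. hd H b r s * hm H p r i * hm H q s j)"

lemma ax_mult':
  assumes HA: "hopf_algebra H"
  shows "(\<Sum>c\<in>UNIV. hm H a b c * hd H c i j) = (\<Sum>p\<in>UNIV. \<Sum>q\<in>UNIV. hd H a p q * WW H b p q i j)"
  unfolding ax_mult[OF HA] WW_def by (simp add: sum_distrib_left mult.assoc)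

definition MM :: "('k::field, 'b::finite) hopf \<Rightarrow> ('b \<Rightarrow> 'k) \<Rightarrow> ('b \<times> 'b \<Rightarrow> 'k) \<Rightarrow> ('b \<times> 'b \<Rightarrow> 'k)" where
  "MM H h D = (\<lambda>(i,j). \<Sum>p\<in>UNIV. \<Sum>q\<in>UNIV. D (p,q) * (\<Sum>b\<in>UNIV. h b * WW H b p q i j))"

lemma comul_hmul:
  assumes HA: "hopf_algebra H"
  shows "hcomul H (hmul H r h) = MM H h (hcomul H r)"
proof (rule ext, clarify)
  fix i j
  have "hcomul H (hmul H r h) (i,j) = (\<Sum>a\<in>UNIV. \<Sum>b\<in>UNIV. r a * h b * (\<Sum>c\<in>UNIV. hm H a b c * hd H c i j))"
    unfolding hcomul_def hmul_def
    by (simp add: sum_distrib_left sum_distrib_right mult.assoc, subst sum.swap, rule sum.cong[OF refl], subst sum.swap, simp)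
  also have "\<dots> = (\<Sum>a\<in>UNIV. \<Sum>b\<in>UNIV. \<Sum>p\<in>UNIV. \<Sum>q\<in>UNIV. r a * h b * (hd H a p q * WW H b p q i j))"
    by (simp add: ax_mult'[OF HA] sum_distrib_left)
  also have "\<dots> = (\<Sum>p\<in>UNIV. \<Sum>q\<in>UNIV. \<Sum>a\<in>UNIV. \<Sum>b\<in>UNIV. r a * h b * (hd H a p q * WW H b p q i j))"
    by (rule sum_swap22)
  also have "\<dots> = MM H h (hcomul H r) (i,j)"
    unfolding MM_def hcomul_def
    by (simp add: sum_distrib_left sum_distrib_right mult_ac, rule sum.cong[OF refl], rule sum.cong[OF refl], rule sum.swap)
  finally show "hcomul H (hmul H r h) (i,j) = MM H h (hcomul H r) (i,j)" .
qed

lemma MM_lin: "lin_on UNIV UNIV (MM H h)"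
  unfolding lin_on_def MM_def vadd_def vscale_def
  by (auto simp: fun_eq_iff algebra_simps sum.distrib sum_distrib_left)

definition R2 :: "('k::field, 'b::finite) hopf \<Rightarrow> ('b \<Rightarrow> 'k) set \<Rightarrow> ('b \<times> 'b \<Rightarrow> 'k) set" where
  "R2 H R = vspan {tensor2 X Y | X Y. X \<in> R \<and> Y \<in> R \<and> (heps H X = 0 \<or> heps H Y = 0)}"

lemma K2_subspace: "subspace_of (K2 H R)" unfolding K2_def by (rule vspan_subspace)
lemma R2_subspace: "subspace_of (R2 H R)" unfolding R2_def by (rule vspan_subspace)

lemma delta_vec: "hmul H X (\<lambda>b. kd r b) = (\<lambda>i. \<Sum>p\<in>UNIV. X p * hm H p r i)"
  unfolding hmul_def by (simp add: kd_def if_distrib if_distribR cong: if_cong)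

lemma MM_tensor2:
  "MM H h (tensor2 X Y) = (\<lambda>x. \<Sum>r\<in>UNIV. \<Sum>s\<in>UNIV. hcomul H h (r,s) * tensor2 (hmul H X (\<lambda>b. kd r b)) (hmul H Y (\<lambda>b. kd s b)) x)"
proof (rule ext, clarify)
  fix i j
  have "MM H h (tensor2 X Y) (i,j) = (\<Sum>p\<in>UNIV. \<Sum>q\<in>UNIV. \<Sum>r\<in>UNIV. \<Sum>s\<in>UNIV. X p * Y q * ((\<Sum>b\<in>UNIV. h b * hd H b r s) * hm H p r i * hm H q s j))"
    unfolding MM_def tensor2_def WW_def
    by (simp add: sum_distrib_left sum_distrib_right mult.assoc, rule sum.cong[OF refl], rule sum.cong[OF refl], subst sum.swap, rule sum.cong[OF refl], subst sum.swap, simp add: mult_ac)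
  also have "\<dots> = (\<Sum>r\<in>UNIV. \<Sum>s\<in>UNIV. \<Sum>p\<in>UNIV. \<Sum>q\<in>UNIV. X p * Y q * ((\<Sum>b\<in>UNIV. h b * hd H b r s) * hm H p r i * hm H q s j))"
    by (rule sum_swap22)
  also have "\<dots> = (\<Sum>r\<in>UNIV. \<Sum>s\<in>UNIV. hcomul H h (r,s) * tensor2 (hmul H X (\<lambda>b. kd r b)) (hmul H Y (\<lambda>b. kd s b)) (i,j))"
    unfolding delta_vec tensor2_def hcomul_def
    apply (simp add: sum_distrib_left sum_distrib_right)
    apply (rule sum.cong[OF refl], rule sum.cong[OF refl])
    apply (rule trans[OF sum3_perms(1)] trans[OF sum3_perms(2)] trans[OF sum3_perms(3)] trans[OF sum3_perms(4)] trans[OF sum3_perms(5)], (simp add: mult_ac; fail))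
    done
  finally show "MM H h (tensor2 X Y) (i, j) = (\<Sum>r\<in>UNIV. \<Sum>s\<in>UNIV. hcomul H h (r,s) * tensor2 (hmul H X (\<lambda>b. kd r b)) (hmul H Y (\<lambda>b. kd s b)) (i,j))" .
qed

lemma gen_Rplus: "X \<in> R \<Longrightarrow> heps H X = 0 \<Longrightarrow> hmul H X h \<in> Rplus_H H R"
  unfolding Rplus_H_def by (rule vspan_superset) blast

lemma sum2_subspace:
  assumes V: "subspace_of V" and g: "\<And>r s. g r s \<in> V"
  shows "(\<lambda>x. \<Sum>r\<in>(UNIV::'b::finite set). \<Sum>s\<in>(UNIV::'b set). c r s * g r s x) \<in> V"
proof -
  have "(\<lambda>x. \<Sum>s\<in>(UNIV::'b set). c r s * g r s x) \<in> V" for r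
    by (rule subspace_sum_scale[OF V]) (auto simp: g)
  then show ?thesis using subspace_sum[OF V, where A=UNIV and g="\<lambda>r x. \<Sum>s\<in>UNIV. c r s * g r s x"] by simp
qed

lemma MM_R2:
  assumes D: "D \<in> R2 H R"
  shows "MM H h D \<in> K2 H R"
proof (rule lin_vspan[OF MM_lin UNIV_subspace _ K2_subspace])
  show "D \<in> vspan {tensor2 X Y | X Y. X \<in> R \<and> Y \<in> R \<and> (heps H X = 0 \<or> heps H Y = 0)}"
    using D unfolding R2_def .
next
  fix s assume "s \<in> {tensor2 X Y | X Y. X \<in> R \<and> Y \<in> R \<and> (heps H X = 0 \<or> heps H Y = 0)}"
  then obtain X Y where s: "s = tensor2 X Y" "X \<in> R" "Y \<in> R" "heps H X = 0 \<or> heps H Y = 0" by blast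
  have "tensor2 (hmul H X (\<lambda>b. kd r b)) (hmul H Y (\<lambda>b. kd s b)) \<in> K2 H R" for r s
    unfolding K2_def using s gen_Rplus by (intro vspan_superset) blast
  then show "MM H h s \<in> K2 H R" unfolding s(1) MM_tensor2 by (rule sum2_subspace[OF K2_subspace])
qed simp


definition PI :: "('k::field, 'b::finite) hopf \<Rightarrow> ('b \<times> 'b \<Rightarrow> 'k) \<Rightarrow> ('b \<times> 'b \<Rightarrow> 'k)" where
  "PI H D = (\<lambda>(p,q). D (p,q) - (\<Sum>p'\<in>UNIV. \<Sum>q'\<in>UNIV. D (p',q') * he H p' * he H q') * (hu H p * hu H q))"

lemma PI_lin: "lin_on UNIV UNIV (PI H)"
  unfolding lin_on_def PI_def vadd_def vscale_def
  by (auto simp: fun_eq_iff algebra_simps sum.distrib sum_distrib_left)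

lemma hcomul_lin: "lin_on UNIV UNIV (hcomul H)"
  unfolding lin_on_def hcomul_def vadd_def vscale_def
  by (auto simp: fun_eq_iff algebra_simps sum.distrib sum_distrib_left)

lemma heps_hu: "hopf_algebra H \<Longrightarrow> heps H (hu H) = 1"
  unfolding heps_def by (rule ax_eps_unit)

lemma R2_gen: "X \<in> R \<Longrightarrow> Y \<in> R \<Longrightarrow> heps H X = 0 \<or> heps H Y = 0 \<Longrightarrow> tensor2 X Y \<in> R2 H R"
  unfolding R2_def by (rule vspan_superset) blast

lemma PI_tensor2:
  assumes HA: "hopf_algebra H" and HR: "hopf_subalgebra H R" and r: "r1 \<in> R" and s: "s1 \<in> R"
  shows "PI H (tensor2 r1 s1) \<in> R2 H R"
proof -
  have RS: "subspace_of R" and hu: "hu H \<in> R" using HR unfolding hopf_subalgebra_def hunit_def by auto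
  define r' where "r' = (\<lambda>a. r1 a + (- heps H r1) * hu H a)"
  define s' where "s' = (\<lambda>a. s1 a + (- heps H s1) * hu H a)"
  have r'R: "r' \<in> R" unfolding r'_def by (rule subspace_add[OF RS r subspace_scale[OF RS hu]])
  have s'R: "s' \<in> R" unfolding s'_def by (rule subspace_add[OF RS s subspace_scale[OF RS hu]])
  have hl: "heps H (\<lambda>a. x a + c * hu H a) = heps H x + c" for x c
    using heps_hu[OF HA] unfolding heps_def by (simp add: distrib_right sum.distrib mult.assoc flip: sum_distrib_left)
  have er: "heps H r' = 0" unfolding r'_def hl by simp
  have es: "heps H s' = 0" unfolding s'_def hl by simp
  have ee: "(\<Sum>p'\<in>UNIV. \<Sum>q'\<in>UNIV. tensor2 r1 s1 (p',q') * he H p' * he H q') = heps H r1 * heps H s1"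
    unfolding tensor2_def heps_def sum_product by (simp add: mult_ac)
  have eq: "PI H (tensor2 r1 s1) = (\<lambda>x. tensor2 r' s1 x + heps H r1 * tensor2 (hu H) s' x)"
    unfolding PI_def ee by (auto simp: fun_eq_iff tensor2_def r'_def s'_def algebra_simps)
  show ?thesis unfolding eq
    by (rule subspace_add[OF R2_subspace R2_gen[OF r'R s] subspace_scale[OF R2_subspace R2_gen[OF hu s'R]]])
       (simp_all add: er es)
qed

lemma comul_eps:
  assumes HA: "hopf_algebra H"
  shows "(\<Sum>p\<in>UNIV. \<Sum>q\<in>UNIV. hcomul H r (p,q) * he H p * he H q) = heps H r"
proof -
  have "(\<Sum>p\<in>UNIV. \<Sum>q\<in>UNIV. hcomul H r (p,q) * he H p * he H q)
      = (\<Sum>a\<in>UNIV. r a * (\<Sum>q\<in>UNIV. (\<Sum>p\<in>UNIV. hd H a p q * he H p) * he H q))"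
    unfolding hcomul_def
    apply (simp add: sum_distrib_left sum_distrib_right)
    apply (rule trans[OF sum3_perms(1)] trans[OF sum3_perms(2)] trans[OF sum3_perms(3)] trans[OF sum3_perms(4)] trans[OF sum3_perms(5)], (simp add: mult_ac; fail))
    done
  also have "\<dots> = heps H r" unfolding heps_def by (simp add: ax_counitL[OF HA])
  finally show ?thesis .
qed

lemma comul_Rplus:
  assumes HA: "hopf_algebra H" and HR: "hopf_subalgebra H R" and k: "k \<in> Rplus_H H R"
  shows "hcomul H k \<in> K2 H R"
proof (rule lin_vspan[OF hcomul_lin UNIV_subspace _ K2_subspace])
  show "k \<in> vspan {hmul H r h | r h. r \<in> R \<and> heps H r = 0}" using k unfolding Rplus_H_def .
next
  fix g assume "g \<in> {hmul H r h | r h. r \<in> R \<and> heps H r = 0}"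
  then obtain r h where g: "g = hmul H r h" and r: "r \<in> R" "heps H r = 0" by blast
  have rr: "hcomul H r \<in> vspan {tensor2 r s | r s. r \<in> R \<and> s \<in> R}"
    using HR r unfolding hopf_subalgebra_def by blast
  have "PI H (hcomul H r) \<in> R2 H R"
    by (rule lin_vspan[OF PI_lin UNIV_subspace _ R2_subspace _ rr]) (auto intro: PI_tensor2[OF HA HR])
  moreover have "PI H (hcomul H r) = hcomul H r"
    unfolding PI_def comul_eps[OF HA] r(2) by (simp add: fun_eq_iff)
  ultimately have "hcomul H r \<in> R2 H R" by simp
  then show "hcomul H g \<in> K2 H R" unfolding g comul_hmul[OF HA] by (rule MM_R2)
qed simp



lemma sum_words2: "(\<Sum>w\<in>words (j + Suc (Suc 0)). f w) = (\<Sum>w0\<in>words j. \<Sum>d\<in>UNIV. \<Sum>e\<in>UNIV. (f (w0 @ [d, e]) :: 'k::comm_monoid_add))"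
  unfolding sum_words_append sum_words_snoc[where k="Suc 0"] sum_words1 by simp

lemma sum_words2': "(\<Sum>w\<in>words (Suc (Suc j)). f w) = (\<Sum>w0\<in>words j. \<Sum>d\<in>UNIV. \<Sum>e\<in>UNIV. (f (w0 @ [d, e]) :: 'k::comm_monoid_add))"
  using sum_words2[where j=j and f=f] by simp

lemma Tm2:
  assumes HA: "hopf_algebra H"
  shows "Tm H (Suc (Suc 0)) y [d',e'] [d,e] = (\<Sum>u1\<in>UNIV. \<Sum>u2\<in>UNIV. hd H y u1 u2 * hm H d' u1 d * hm H e' u2 e)"
  using Tm_split[OF HA, of "[d']" "Suc 0" "[d]" "[e']" "Suc 0" "[e]" y] by (simp add: Tm1[OF HA] mult_ac)

lemma inner_dup:
  assumes HA: "hopf_algebra H"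
  shows "(\<Sum>a\<in>UNIV. hm H a' y a * hd H a d e) = (\<Sum>d'\<in>UNIV. \<Sum>e'\<in>UNIV. hd H a' d' e' * Tm H (Suc (Suc 0)) y [d',e'] [d,e])"
  unfolding Tm2[OF HA] ax_mult[OF HA] by (simp add: sum_distrib_left mult.assoc)

lemma Tm_snoc1:
  assumes HA: "hopf_algebra H" and l: "length w0 = j" "length v0 = j"
  shows "Tm H (Suc j) c (w0@[a']) (v0@[a]) = (\<Sum>x\<in>UNIV. \<Sum>y\<in>UNIV. hd H c x y * Tm H j x w0 v0 * hm H a' y a)"
  using Tm_split[OF HA l(1,2), of "[a']" "Suc 0" "[a]" c] by (simp add: Tm1[OF HA])

lemma Tm_snoc2:
  assumes HA: "hopf_algebra H" and l: "length w0 = j" "length v0 = j"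
  shows "Tm H (Suc (Suc j)) c (w0@[d',e']) (v0@[d,e]) = (\<Sum>x\<in>UNIV. \<Sum>y\<in>UNIV. hd H c x y * Tm H j x w0 v0 * Tm H (Suc (Suc 0)) y [d',e'] [d,e])"
  using Tm_split[OF HA l(1,2), of "[d',e']" "Suc (Suc 0)" "[d,e]" c] by simp

lemma key_dup:
  assumes HA: "hopf_algebra H" and l: "length w0 = j" "length v0 = j"
  shows "(\<Sum>a\<in>UNIV. Tm H (Suc j) c (w0@[a']) (v0@[a]) * hd H a d e)
       = (\<Sum>d'\<in>UNIV. \<Sum>e'\<in>UNIV. hd H a' d' e' * Tm H (Suc (Suc j)) c (w0@[d',e']) (v0@[d,e]))"
proof -
  have "(\<Sum>a\<in>UNIV. Tm H (Suc j) c (w0@[a']) (v0@[a]) * hd H a d e)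
      = (\<Sum>a\<in>UNIV. \<Sum>x\<in>UNIV. \<Sum>y\<in>UNIV. hd H c x y * Tm H j x w0 v0 * (hm H a' y a * hd H a d e))"
    unfolding Tm_snoc1[OF HA l] by (simp add: sum_distrib_right mult.assoc)
  also have "\<dots> = (\<Sum>x\<in>UNIV. \<Sum>y\<in>UNIV. \<Sum>a\<in>UNIV. hd H c x y * Tm H j x w0 v0 * (hm H a' y a * hd H a d e))"
    by (rule sum3_p3)
  also have "\<dots> = (\<Sum>x\<in>UNIV. \<Sum>y\<in>UNIV. hd H c x y * Tm H j x w0 v0 * (\<Sum>a\<in>UNIV. hm H a' y a * hd H a d e))"
    by (simp add: sum_distrib_left)
  also have "\<dots> = (\<Sum>x\<in>UNIV. \<Sum>y\<in>UNIV. hd H c x y * Tm H j x w0 v0 * (\<Sum>d'\<in>UNIV. \<Sum>e'\<in>UNIV. hd H a' d' e' * Tm H (Suc (Suc 0)) y [d',e'] [d,e]))"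
    by (simp add: inner_dup[OF HA])
  also have "\<dots> = (\<Sum>x\<in>UNIV. \<Sum>y\<in>UNIV. \<Sum>d'\<in>UNIV. \<Sum>e'\<in>UNIV. hd H a' d' e' * (hd H c x y * Tm H j x w0 v0 * Tm H (Suc (Suc 0)) y [d',e'] [d,e]))"
    by (simp add: sum_distrib_left mult_ac)
  also have "\<dots> = (\<Sum>d'\<in>UNIV. \<Sum>e'\<in>UNIV. \<Sum>x\<in>UNIV. \<Sum>y\<in>UNIV. hd H a' d' e' * (hd H c x y * Tm H j x w0 v0 * Tm H (Suc (Suc 0)) y [d',e'] [d,e]))"
    by (rule sum_swap22)
  also have "\<dots> = (\<Sum>d'\<in>UNIV. \<Sum>e'\<in>UNIV. hd H a' d' e' * Tm H (Suc (Suc j)) c (w0@[d',e']) (v0@[d,e]))"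
    unfolding Tm_snoc2[OF HA l] by (simp add: sum_distrib_left)
  finally show ?thesis .
qed

definition dup :: "('k::field, 'b::finite) hopf \<Rightarrow> nat \<Rightarrow> ('b list \<Rightarrow> 'k) \<Rightarrow> ('b list \<Rightarrow> 'k)" where
  "dup H j y = (\<lambda>v. if length v = Suc (Suc j) then (\<Sum>c\<in>UNIV. y (take j v @ [c]) * hd H c (v!j) (v!Suc j)) else 0)"

lemma split2: "length v = Suc (Suc j) \<Longrightarrow> v = take j v @ [v!j, v!Suc j]"
  by (rule nth_equalityI) (auto simp: nth_append less_Suc_eq)

lemma dup_app2: "length w0 = j \<Longrightarrow> dup H j y (w0 @ [d,e]) = (\<Sum>c\<in>UNIV. y (w0 @ [c]) * hd H c d e)"
  by (simp add: dup_def nth_append)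

lemma dup_tact:
  assumes HA: "hopf_algebra H"
  shows "dup H j (tact H (Suc j) y h) = tact H (Suc (Suc j)) (dup H j y) h"
proof
  fix v :: "'b list"
  show "dup H j (tact H (Suc j) y h) v = tact H (Suc (Suc j)) (dup H j y) h v"
  proof (cases "length v = Suc (Suc j)")
    case False then show ?thesis by (simp add: dup_def tact_def)
  next
    case True
    define v0 d e where "v0 = take j v" and "d = v!j" and "e = v!Suc j"
    have v: "v = v0 @ [d,e]" using split2[OF True] by (simp add: v0_def d_def e_def)
    have lv0: "length v0 = j" using True by (simp add: v0_def)
    have "dup H j (tact H (Suc j) y h) v = (\<Sum>a\<in>UNIV. (\<Sum>c\<in>UNIV. h c * (\<Sum>w\<in>words (Suc j). y w * Tm H (Suc j) c w (v0@[a]))) * hd H a d e)"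
      unfolding v dup_app2[OF lv0] using lv0 by (simp add: tact_Tm)
    also have "\<dots> = (\<Sum>c\<in>UNIV. h c * (\<Sum>a\<in>UNIV. (\<Sum>w\<in>words (Suc j). y w * Tm H (Suc j) c w (v0@[a])) * hd H a d e))"
      by (simp add: sum_distrib_left sum_distrib_right mult.assoc, subst sum.swap, simp)
    also have "\<dots> = (\<Sum>c\<in>UNIV. h c * (\<Sum>w0\<in>words j. \<Sum>a'\<in>UNIV. y (w0@[a']) *
           (\<Sum>d'\<in>UNIV. \<Sum>e'\<in>UNIV. hd H a' d' e' * Tm H (Suc (Suc j)) c (w0@[d',e']) (v0@[d,e]))))"
    proof -
      have "(\<Sum>a\<in>UNIV. (\<Sum>w\<in>words (Suc j). y w * Tm H (Suc j) c w (v0@[a])) * hd H a d e)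
          = (\<Sum>w0\<in>words j. \<Sum>a'\<in>UNIV. y (w0@[a']) *
           (\<Sum>d'\<in>UNIV. \<Sum>e'\<in>UNIV. hd H a' d' e' * Tm H (Suc (Suc j)) c (w0@[d',e']) (v0@[d,e])))" for c
      proof -
        have "(\<Sum>a\<in>UNIV. (\<Sum>w\<in>words (Suc j). y w * Tm H (Suc j) c w (v0@[a])) * hd H a d e)
            = (\<Sum>a\<in>UNIV. \<Sum>w0\<in>words j. \<Sum>a'\<in>UNIV. y (w0@[a']) * (Tm H (Suc j) c (w0@[a']) (v0@[a]) * hd H a d e))"
          unfolding sum_words_snoc by (simp add: sum_distrib_right mult.assoc)
        also have "\<dots> = (\<Sum>w0\<in>words j. \<Sum>a'\<in>UNIV. \<Sum>a\<in>UNIV. y (w0@[a']) * (Tm H (Suc j) c (w0@[a']) (v0@[a]) * hd H a d e))"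
          by (rule sum3_p3)
        also have "\<dots> = (\<Sum>w0\<in>words j. \<Sum>a'\<in>UNIV. y (w0@[a']) *
           (\<Sum>d'\<in>UNIV. \<Sum>e'\<in>UNIV. hd H a' d' e' * Tm H (Suc (Suc j)) c (w0@[d',e']) (v0@[d,e])))"
          by (rule sum.cong[OF refl], rule sum.cong[OF refl])
             (simp add: key_dup[OF HA _ lv0, symmetric] words_def flip: sum_distrib_left)
        finally show ?thesis .
      qed
      then show ?thesis by simp
    qed
    also have "\<dots> = (\<Sum>c\<in>UNIV. h c * (\<Sum>w0\<in>words j. \<Sum>d'\<in>UNIV. \<Sum>e'\<in>UNIV.
           dup H j y (w0 @ [d',e']) * Tm H (Suc (Suc j)) c (w0@[d',e']) (v0@[d,e])))"
    proof -
      have "(\<Sum>a'\<in>UNIV. y (w0@[a']) * (\<Sum>d'\<in>UNIV. \<Sum>e'\<in>UNIV. hd H a' d' e' * Tm H (Suc (Suc j)) c (w0@[d',e']) (v0@[d,e])))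
          = (\<Sum>d'\<in>UNIV. \<Sum>e'\<in>UNIV. dup H j y (w0 @ [d',e']) * Tm H (Suc (Suc j)) c (w0@[d',e']) (v0@[d,e]))"
        if "w0 \<in> words j" for w0 c
      proof -
        have lw: "length w0 = j" using that by (simp add: words_def)
        have "(\<Sum>a'\<in>UNIV. y (w0@[a']) * (\<Sum>d'\<in>UNIV. \<Sum>e'\<in>UNIV. hd H a' d' e' * Tm H (Suc (Suc j)) c (w0@[d',e']) (v0@[d,e])))
           = (\<Sum>a'\<in>UNIV. \<Sum>d'\<in>UNIV. \<Sum>e'\<in>UNIV. y (w0@[a']) * hd H a' d' e' * Tm H (Suc (Suc j)) c (w0@[d',e']) (v0@[d,e]))"
          by (simp add: sum_distrib_left mult.assoc)
        also have "\<dots> = (\<Sum>d'\<in>UNIV. \<Sum>e'\<in>UNIV. \<Sum>a'\<in>UNIV. y (w0@[a']) * hd H a' d' e' * Tm H (Suc (Suc j)) c (w0@[d',e']) (v0@[d,e]))"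
          by (rule sum3_p3)
        also have "\<dots> = (\<Sum>d'\<in>UNIV. \<Sum>e'\<in>UNIV. dup H j y (w0 @ [d',e']) * Tm H (Suc (Suc j)) c (w0@[d',e']) (v0@[d,e]))"
          unfolding dup_app2[OF lw] by (simp add: sum_distrib_right)
        finally show ?thesis .
      qed
      then show ?thesis by (simp cong: sum.cong)
    qed
    also have "\<dots> = tact H (Suc (Suc j)) (dup H j y) h v"
      unfolding v tact_Tm[OF True[unfolded v]] sum_words2' by simp
    finally show ?thesis .
  qed
qed



lemma endo_lin: "endo H R n f \<Longrightarrow> lin_on (tpow n) (tpow n) f"
  unfolding endo_def by blast

lemma f_sum_tail:
  assumes f: "lin_on (tpow n) (tpow n) f" and S: "finite S"
  shows "f (\<lambda>u. if length u = n then (\<Sum>c\<in>S. \<alpha> c * Y c u) else 0)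
       = (\<lambda>u'. \<Sum>c\<in>S. \<alpha> c * f (\<lambda>u. if length u = n then Y c u else 0) u')"
proof -
  have e: "(\<lambda>u. if length u = n then (\<Sum>c\<in>S. \<alpha> c * Y c u) else 0)
      = (\<lambda>u. \<Sum>c\<in>S. \<alpha> c * (\<lambda>u. if length u = n then Y c u else 0) u)"
    by (auto simp: fun_eq_iff)
  have "f (\<lambda>u. \<Sum>c\<in>S. \<alpha> c * (\<lambda>u. if length u = n then Y c u else 0) u) = (\<lambda>u'. \<Sum>c\<in>S. \<alpha> c * f (\<lambda>u. if length u = n then Y c u else 0) u')"
    by (rule lin_sum_scale[OF f tpow_subspace S]) (auto simp: tpow_def)
  then show ?thesis unfolding e .
qed

lemma f_scale_tail:
  assumes f: "lin_on (tpow n) (tpow n) f"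
  shows "f (\<lambda>u. if length u = n then \<alpha> * Y u else 0) = (\<lambda>u'. \<alpha> * f (\<lambda>u. if length u = n then Y u else 0) u')"
proof -
  have "(\<lambda>u. if length u = n then \<alpha> * Y u else 0) = (\<lambda>u. \<alpha> * (\<lambda>u. if length u = n then Y u else 0) u)"
    by (auto simp: fun_eq_iff)
  then show ?thesis using lin_scale[OF f, of "\<lambda>u. if length u = n then Y u else 0" \<alpha>] by (simp add: tpow_def)
qed

lemma ext_id_app: "length v = n + m \<Longrightarrow> ext_id f n m y v = f (\<lambda>u. if length u = n then y (u @ drop n v) else 0) (take n v)"
  by (simp add: ext_id_def)

lemma dup_ext:
  fixes H :: "('k::field,'b::finite) hopf"
  assumes en: "endo H R n f" and nj: "n \<le> j"
  shows "dup H j (ext_id f n (Suc j - n) y) = ext_id f n (Suc (Suc j) - n) (dup H j y)"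
proof
  fix v :: "'b list"
  have fl: "lin_on (tpow n) (tpow n) f" by (rule endo_lin[OF en])
  show "dup H j (ext_id f n (Suc j - n) y) v = ext_id f n (Suc (Suc j) - n) (dup H j y) v"
  proof (cases "length v = Suc (Suc j)")
    case False then show ?thesis using nj by (simp add: dup_def ext_id_def)
  next
    case True
    define \<alpha> where "\<alpha> c = hd H c (v!j) (v!Suc j)" for c
    define Y where "Y c u = y (u @ drop n (take j v) @ [c])" for c u
    have l1: "length (take j v @ [c]) = n + (Suc j - n)" for c using True nj by simp
    have "dup H j (ext_id f n (Suc j - n) y) v = (\<Sum>c\<in>UNIV. f (\<lambda>u. if length u = n then Y c u else 0) (take n v) * \<alpha> c)"
    proof -
      have dr: "drop n (take j v @ [c]) = drop n (take j v) @ [c]" for c using True nj by simp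
      show ?thesis unfolding dup_def Y_def \<alpha>_def using True nj by (simp add: ext_id_app[OF l1], simp only: dr)
    qed
    also have "\<dots> = f (\<lambda>u. if length u = n then (\<Sum>c\<in>UNIV. \<alpha> c * Y c u) else 0) (take n v)"
      unfolding f_sum_tail[OF fl finite_UNIV] by (simp add: mult.commute)
    also have "\<dots> = f (\<lambda>u. if length u = n then dup H j y (u @ drop n v) else 0) (take n v)"
    proof -
      have "(\<lambda>u. if length u = n then (\<Sum>c\<in>UNIV. \<alpha> c * Y c u) else 0) = (\<lambda>u. if length u = n then dup H j y (u @ drop n v) else 0)"
      proof (rule ext)
        fix u :: "'b list"
        show "(if length u = n then (\<Sum>c\<in>UNIV. \<alpha> c * Y c u) else 0) = (if length u = n then dup H j y (u @ drop n v) else 0)"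
        proof (cases "length u = n")
          case True2: True
          have a: "take j (u @ drop n v) = u @ drop n (take j v)" using True2 nj
            by (simp add: take_drop)
          have b: "(u @ drop n v) ! j = v ! j" "(u @ drop n v) ! Suc j = v ! Suc j"
            using True2 nj True by (auto simp: nth_append)
          show ?thesis using True2 True nj unfolding dup_def a b Y_def \<alpha>_def by (simp add: mult.commute)
        qed simp
      qed
      then show ?thesis by simp
    qed
    also have "\<dots> = ext_id f n (Suc (Suc j) - n) (dup H j y) v"
      using True nj by (simp add: ext_id_def)
    finally show ?thesis .
  qed
qed

lemma tens_upd:
  "length w = length hs \<Longrightarrow> i < length hs \<Longrightarrow>
    tens hs (w[i:=a]) = (\<Prod>l\<in>{..<length hs}-{i}. (hs!l) (w!l)) * (hs!i) a"
  unfolding tens_def using prod_upd[of i "length hs" w "\<lambda>l x. (hs!l) x" a] by simp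

lemma qker_prefix:
  fixes hs :: "('b::finite \<Rightarrow> 'k::field) list"
  assumes l: "length hs = j" and i: "i < j" and K: "hs ! i \<in> Rplus_H H R"
  shows "(\<lambda>v. if length v = j + m then tens hs (take j v) * G (drop j v) else 0) \<in> qker H R (j + m)"
proof (rule qker_slice[where i=i])
  show "(\<lambda>v. if length v = j + m then tens hs (take j v) * G (drop j v) else 0) \<in> tpow (j + m)"
    by (simp add: tpow_def)
  show "i < j + m" using i by simp
  fix v :: "'b list" assume v: "length v = j + m"
  have "(\<lambda>a. (\<lambda>v. if length v = j + m then tens hs (take j v) * G (drop j v) else 0) (v[i:=a]))
      = (\<lambda>a. ((\<Prod>l\<in>{..<length hs}-{i}. (hs!l) (take j v!l)) * G (drop j v)) * (hs!i) a)"
    using v i l by (auto simp: fun_eq_iff take_update_swap tens_upd mult_ac)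
  then show "(\<lambda>a. (\<lambda>v. if length v = j + m then tens hs (take j v) * G (drop j v) else 0) (v[i:=a])) \<in> Rplus_H H R"
    using subspace_scale[OF Rplus_subspace K] by simp
qed

lemma dup_lin: "lin_on UNIV UNIV (dup H j)"
  unfolding lin_on_def dup_def vadd_def vscale_def
  by (auto simp: fun_eq_iff algebra_simps sum.distrib sum_distrib_left)

lemma dup_lin_tpow: "lin_on (tpow (Suc j)) (tpow (Suc (Suc j))) (dup H j)"
  using dup_lin[of H j] unfolding lin_on_def by (auto simp: tpow_def dup_def)

lemma dup_tens:
  fixes H :: "('k::field,'b::finite) hopf"
  assumes l: "length hs = Suc j"
  shows "dup H j (tens hs) = (\<lambda>v. if length v = Suc (Suc j) then tens (take j hs) (take j v) * hcomul H (hs!j) (v!j, v!Suc j) else 0)"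
proof (rule ext)
  fix v :: "'b list"
  have hs: "hs = take j hs @ [hs!j]" using l by (metis lessI take_Suc_conv_app_nth take_all order_refl)
  show "dup H j (tens hs) v = (if length v = Suc (Suc j) then tens (take j hs) (take j v) * hcomul H (hs!j) (v!j, v!Suc j) else 0)"
  proof (cases "length v = Suc (Suc j)")
    case True
    have "tens hs (take j v @ [c]) = tens (take j hs) (take j v) * (hs!j) c" for c
      using tens_snoc[of "take j hs" j "take j v" "hs!j" c] True l hs by simp
    then show ?thesis using True by (simp add: dup_def hcomul_def sum_distrib_left mult_ac)
  qed (simp add: dup_def)
qed

lemma dup_qker:
  assumes HA: "hopf_algebra H" and HR: "hopf_subalgebra H R" and x: "x \<in> qker H R (Suc j)"
  shows "dup H j x \<in> qker H R (Suc (Suc j))"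
proof (rule lin_vspan[OF dup_lin UNIV_subspace _ qker_subspace])
  show "x \<in> vspan {tens hs | hs. length hs = Suc j \<and> (\<exists>i<Suc j. hs ! i \<in> Rplus_H H R)}"
    using x unfolding qker_def .
next
  fix s assume "s \<in> {tens hs | hs. length hs = Suc j \<and> (\<exists>i<Suc j. hs ! i \<in> Rplus_H H R)}"
  then obtain hs i where s: "s = tens hs" and l: "length hs = Suc j" and i: "i < Suc j" and K: "hs ! i \<in> Rplus_H H R"
    by blast
  show "dup H j s \<in> qker H R (Suc (Suc j))"
  proof (cases "i = j")
    case True
    have A: "tens (take j hs) \<in> tpow j" using l by (simp add: tpow_def tens_def)
    have G: "hcomul H (hs!j) \<in> K2 H R" using comul_Rplus[OF HA HR] K True by simp
    show ?thesis unfolding s dup_tens[OF l] by (rule qker_ext2[OF A G])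
  next
    case False
    then have ij: "i < j" using i by simp
    have "(\<lambda>v. if length v = j + Suc (Suc 0) then tens (take j hs) (take j v) * (\<lambda>w. hcomul H (hs!j) (w!0, w!Suc 0)) (drop j v) else 0)
       \<in> qker H R (j + Suc (Suc 0))"
      by (rule qker_prefix) (use l ij K in auto)
    moreover have "(\<lambda>v. if length v = j + Suc (Suc 0) then tens (take j hs) (take j v) * (\<lambda>w. hcomul H (hs!j) (w!0, w!Suc 0)) (drop j v) else 0)
        = dup H j s"
      unfolding s dup_tens[OF l] by (auto simp: fun_eq_iff)
    ultimately show ?thesis by simp
  qed
qed simp



definition epsl :: "('k::field, 'b::finite) hopf \<Rightarrow> nat \<Rightarrow> ('b list \<Rightarrow> 'k) \<Rightarrow> ('b list \<Rightarrow> 'k)" where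
  "epsl H k z = (\<lambda>v. if length v = k then (\<Sum>a\<in>UNIV. z (v @ [a]) * he H a) else 0)"

lemma epsl_lin: "lin_on UNIV UNIV (epsl H k)"
  unfolding lin_on_def epsl_def vadd_def vscale_def
  by (auto simp: fun_eq_iff algebra_simps sum.distrib sum_distrib_left)

lemma epsl_lin_tpow: "lin_on (tpow (Suc k)) (tpow k) (epsl H k)"
  using epsl_lin[of H k] unfolding lin_on_def by (auto simp: tpow_def epsl_def)

lemma epsl_tens:
  fixes H :: "('k::field,'b::finite) hopf"
  assumes l: "length hs = Suc k"
  shows "epsl H k (tens hs) = (\<lambda>v. heps H (hs!k) * tens (take k hs) v)"
proof (rule ext)
  fix v :: "'b list"
  have hs: "hs = take k hs @ [hs!k]" using l by (metis lessI take_Suc_conv_app_nth take_all order_refl)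
  show "epsl H k (tens hs) v = heps H (hs!k) * tens (take k hs) v"
  proof (cases "length v = k")
    case True
    have "tens hs (v @ [c]) = tens (take k hs) v * (hs!k) c" for c
      using tens_snoc[of "take k hs" k v "hs!k" c] True l hs by simp
    then show ?thesis using True by (simp add: epsl_def heps_def sum_distrib_left mult_ac)
  qed (use l in \<open>simp add: epsl_def tens_def\<close>)
qed

lemma epsl_qker:
  assumes HA: "hopf_algebra H" and x: "x \<in> qker H R (Suc k)"
  shows "epsl H k x \<in> qker H R k"
proof (rule lin_vspan[OF epsl_lin UNIV_subspace _ qker_subspace])
  show "x \<in> vspan {tens hs | hs. length hs = Suc k \<and> (\<exists>i<Suc k. hs ! i \<in> Rplus_H H R)}"
    using x unfolding qker_def .
next
  fix s assume "s \<in> {tens hs | hs. length hs = Suc k \<and> (\<exists>i<Suc k. hs ! i \<in> Rplus_H H R)}"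
  then obtain hs i where s: "s = tens hs" and l: "length hs = Suc k" and i: "i < Suc k" and K: "hs ! i \<in> Rplus_H H R"
    by blast
  show "epsl H k s \<in> qker H R k"
  proof (cases "i = k")
    case True
    then have "heps H (hs!k) = 0" using heps_Rplus[OF HA K] by simp
    then show ?thesis unfolding s epsl_tens[OF l] by (simp add: subspace_zero[OF qker_subspace])
  next
    case False
    have "tens (take k hs) \<in> qker H R k" using l i K False by (intro tens_in_qker[of _ k i]) auto
    then show ?thesis unfolding s epsl_tens[OF l] by (rule subspace_scale[OF qker_subspace])
  qed
qed simp

lemma key_eps:
  assumes HA: "hopf_algebra H" and l: "length w = k" "length v = k"
  shows "(\<Sum>a\<in>UNIV. Tm H (Suc k) c (w@[b]) (v@[a]) * he H a) = he H b * Tm H k c w v"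
proof -
  have "(\<Sum>a\<in>UNIV. Tm H (Suc k) c (w@[b]) (v@[a]) * he H a)
      = (\<Sum>a\<in>UNIV. \<Sum>x\<in>UNIV. \<Sum>y\<in>UNIV. hd H c x y * Tm H k x w v * (hm H b y a * he H a))"
    unfolding Tm_snoc1[OF HA l] by (simp add: sum_distrib_right mult.assoc)
  also have "\<dots> = (\<Sum>x\<in>UNIV. \<Sum>y\<in>UNIV. \<Sum>a\<in>UNIV. hd H c x y * Tm H k x w v * (hm H b y a * he H a))"
    by (rule sum3_p3)
  also have "\<dots> = (\<Sum>x\<in>UNIV. \<Sum>y\<in>UNIV. hd H c x y * Tm H k x w v * (he H b * he H y))"
    by (simp add: ax_eps_mult[OF HA] flip: sum_distrib_left)
  also have "\<dots> = he H b * (\<Sum>x\<in>UNIV. (\<Sum>y\<in>UNIV. hd H c x y * he H y) * Tm H k x w v)"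
    by (simp add: sum_distrib_left sum_distrib_right mult_ac)
  also have "\<dots> = he H b * Tm H k c w v" by (simp add: ax_counitR[OF HA])
  finally show ?thesis .
qed

lemma epsl_tact:
  assumes HA: "hopf_algebra H"
  shows "epsl H k (tact H (Suc k) z h) = tact H k (epsl H k z) h"
proof
  fix v :: "'b list"
  show "epsl H k (tact H (Suc k) z h) v = tact H k (epsl H k z) h v"
  proof (cases "length v = k")
    case False then show ?thesis by (simp add: epsl_def tact_def)
  next
    case True
    have lva: "length (v @ [a]) = Suc k" for a using True by simp
    have "epsl H k (tact H (Suc k) z h) v = (\<Sum>a\<in>UNIV. (\<Sum>c\<in>UNIV. h c * (\<Sum>w\<in>words k. \<Sum>b\<in>UNIV. z (w@[b]) * Tm H (Suc k) c (w@[b]) (v@[a]))) * he H a)"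
      unfolding epsl_def using True by (simp add: tact_Tm[OF lva] sum_words_snoc)
    also have "\<dots> = (\<Sum>c\<in>UNIV. h c * (\<Sum>w\<in>words k. \<Sum>b\<in>UNIV. z (w@[b]) * (\<Sum>a\<in>UNIV. Tm H (Suc k) c (w@[b]) (v@[a]) * he H a)))"
    proof -
      have "(\<Sum>a\<in>UNIV. (\<Sum>c\<in>UNIV. h c * (\<Sum>w\<in>words k. \<Sum>b\<in>UNIV. z (w@[b]) * Tm H (Suc k) c (w@[b]) (v@[a]))) * he H a)
         = (\<Sum>a\<in>UNIV. \<Sum>c\<in>UNIV. \<Sum>w\<in>words k. \<Sum>b\<in>UNIV. h c * (z (w@[b]) * (Tm H (Suc k) c (w@[b]) (v@[a]) * he H a)))"
        by (simp add: sum_distrib_left sum_distrib_right mult.assoc)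
      also have "\<dots> = (\<Sum>c\<in>UNIV. \<Sum>w\<in>words k. \<Sum>a\<in>UNIV. \<Sum>b\<in>UNIV. h c * (z (w@[b]) * (Tm H (Suc k) c (w@[b]) (v@[a]) * he H a)))"
        by (rule trans[OF sum.swap], rule sum.cong[OF refl], rule sum.swap)
      also have "\<dots> = (\<Sum>c\<in>UNIV. \<Sum>w\<in>words k. \<Sum>b\<in>UNIV. \<Sum>a\<in>UNIV. h c * (z (w@[b]) * (Tm H (Suc k) c (w@[b]) (v@[a]) * he H a)))"
        by (rule sum.cong[OF refl], rule sum.cong[OF refl], rule sum.swap)
      also have "\<dots> = (\<Sum>c\<in>UNIV. h c * (\<Sum>w\<in>words k. \<Sum>b\<in>UNIV. z (w@[b]) * (\<Sum>a\<in>UNIV. Tm H (Suc k) c (w@[b]) (v@[a]) * he H a)))"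
        by (simp add: sum_distrib_left)
      finally show ?thesis .
    qed
    also have "\<dots> = (\<Sum>c\<in>UNIV. h c * (\<Sum>w\<in>words k. (\<Sum>b\<in>UNIV. z (w@[b]) * he H b) * Tm H k c w v))"
      by (rule sum.cong[OF refl], rule arg_cong[where f="\<lambda>x. _ * x"], rule sum.cong[OF refl])
         (simp add: key_eps[OF HA _ True] words_def, simp add: sum_distrib_left sum_distrib_right mult_ac)
    also have "\<dots> = tact H k (epsl H k z) h v"
      unfolding tact_Tm[OF True] by (rule sum.cong[OF refl], rule arg_cong[where f="\<lambda>x. _ * x"], rule sum.cong[OF refl])
         (simp add: epsl_def words_def)
    finally show ?thesis .
  qed
qed

lemma epsl_ext:
  fixes H :: "('k::field,'b::finite) hopf"
  assumes en: "endo H R n f" and nk: "n \<le> k"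
  shows "epsl H k (ext_id f n (Suc k - n) z) = ext_id f n (k - n) (epsl H k z)"
proof
  fix v :: "'b list"
  have fl: "lin_on (tpow n) (tpow n) f" by (rule endo_lin[OF en])
  show "epsl H k (ext_id f n (Suc k - n) z) v = ext_id f n (k - n) (epsl H k z) v"
  proof (cases "length v = k")
    case False then show ?thesis using nk by (simp add: epsl_def ext_id_def)
  next
    case True
    have l1: "length (v @ [a]) = n + (Suc k - n)" for a using True nk by simp
    have dr: "drop n (v @ [a]) = drop n v @ [a]" for a using True nk by simp
    have nk0: "n - k = 0" using nk by simp
    have "epsl H k (ext_id f n (Suc k - n) z) v
        = (\<Sum>a\<in>UNIV. he H a * f (\<lambda>u. if length u = n then z (u @ drop n v @ [a]) else 0) (take n v))"
      unfolding epsl_def using True by (simp add: ext_id_app[OF l1] nk0 mult.commute, simp only: dr)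
    also have "\<dots> = f (\<lambda>u. if length u = n then (\<Sum>a\<in>UNIV. he H a * z (u @ drop n v @ [a])) else 0) (take n v)"
      unfolding f_sum_tail[OF fl finite_UNIV] ..
    also have "\<dots> = ext_id f n (k - n) (epsl H k z) v"
      using True nk by (simp add: ext_id_def epsl_def mult.commute cong: if_cong)
    finally show ?thesis .
  qed
qed

lemma epsl_dup:
  assumes HA: "hopf_algebra H" and y: "y \<in> tpow (Suc j)"
  shows "epsl H (Suc j) (dup H j y) = y"
proof
  fix v :: "'b list"
  show "epsl H (Suc j) (dup H j y) v = y v"
  proof (cases "length v = Suc j")
    case False then show ?thesis using y by (simp add: epsl_def tpow_def)
  next
    case True
    have v: "take j v @ [v!j] = v" using True by (metis lessI take_Suc_conv_app_nth take_all order_refl)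
    have "epsl H (Suc j) (dup H j y) v = (\<Sum>a\<in>UNIV. (\<Sum>c\<in>UNIV. y (take j v @ [c]) * hd H c (v!j) a) * he H a)"
      unfolding epsl_def dup_def using True by (simp add: nth_append)
    also have "\<dots> = (\<Sum>c\<in>UNIV. y (take j v @ [c]) * (\<Sum>a\<in>UNIV. hd H c (v!j) a * he H a))"
      by (simp add: sum_distrib_left sum_distrib_right mult.assoc, subst sum.swap, simp)
    also have "\<dots> = y v" by (simp add: ax_counitR[OF HA] v)
    finally show ?thesis .
  qed
qed

lemma summand_dup:
  fixes H :: "('k::field,'b::finite) hopf"
  assumes HA: "hopf_algebra H" and HR: "hopf_subalgebra H R" and nj: "n \<le> j"
  shows "bimod_summand H R n (Suc j) (Suc (Suc j))"
  unfolding bimod_summand_def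
proof (intro exI conjI ballI)
  show "bimap H R n (Suc j) (Suc (Suc j)) (dup H j)"
    unfolding bimap_def
    using dup_lin_tpow dup_qker[OF HA HR] dup_tact[OF HA]
    by (auto simp: subspace_zero[OF qker_subspace] dup_ext[OF _ nj])
  show "bimap H R n (Suc (Suc j)) (Suc j) (epsl H (Suc j))"
    unfolding bimap_def
    using epsl_lin_tpow epsl_qker[OF HA] epsl_tact[OF HA] nj
    by (auto simp: subspace_zero[OF qker_subspace] epsl_ext[of H R n _ "Suc j"])
  fix x :: "'b list \<Rightarrow> 'k" assume "x \<in> tpow (Suc j)"
  then show "vsub (epsl H (Suc j) (dup H j x)) x \<in> qker H R (Suc j)"
    by (simp add: epsl_dup[OF HA] subspace_zero[OF qker_subspace])
qed



definition tmap :: "('k::field, 'b::finite) hopf \<Rightarrow> nat \<Rightarrow> ('b \<Rightarrow> 'k) \<Rightarrow> ('b list \<Rightarrow> 'k) \<Rightarrow> ('b list \<Rightarrow> 'k)" where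
  "tmap H k t y = (\<lambda>v. if length v = Suc k then y (take k v) * t (v!k) else 0)"

lemma tmap_lin: "lin_on UNIV UNIV (tmap H k t)"
  unfolding lin_on_def tmap_def vadd_def vscale_def
  by (auto simp: fun_eq_iff algebra_simps)

lemma tmap_lin_tpow: "lin_on (tpow k) (tpow (Suc k)) (tmap H k t)"
  using tmap_lin[of H k t] unfolding lin_on_def by (auto simp: tpow_def tmap_def)

lemma split1: "length v = Suc k \<Longrightarrow> take k v @ [v!k] = v"
  by (metis lessI take_Suc_conv_app_nth take_all order_refl)

lemma tmap_tens:
  fixes H :: "('k::field,'b::finite) hopf"
  assumes l: "length hs = k"
  shows "tmap H k t (tens hs) = tens (hs @ [t])"
proof (rule ext)
  fix v :: "'b list"
  show "tmap H k t (tens hs) v = tens (hs @ [t]) v"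
  proof (cases "length v = Suc k")
    case True
    have "tens (hs @ [t]) (take k v @ [v!k]) = tens hs (take k v) * t (v!k)"
      by (rule tens_snoc) (use l True in auto)
    then show ?thesis using True split1[OF True] by (simp add: tmap_def)
  qed (use l in \<open>simp add: tmap_def tens_def\<close>)
qed

lemma tmap_qker:
  assumes x: "x \<in> qker H R k"
  shows "tmap H k t x \<in> qker H R (Suc k)"
proof (rule lin_vspan[OF tmap_lin UNIV_subspace _ qker_subspace])
  show "x \<in> vspan {tens hs | hs. length hs = k \<and> (\<exists>i<k. hs ! i \<in> Rplus_H H R)}"
    using x unfolding qker_def .
next
  fix s assume "s \<in> {tens hs | hs. length hs = k \<and> (\<exists>i<k. hs ! i \<in> Rplus_H H R)}"
  then obtain hs i where s: "s = tens hs" and l: "length hs = k" and i: "i < k" and K: "hs ! i \<in> Rplus_H H R"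
    by blast
  show "tmap H k t s \<in> qker H R (Suc k)" unfolding s tmap_tens[OF l]
    by (rule tens_in_qker[of _ "Suc k" i]) (use l i K in \<open>auto simp: nth_append\<close>)
qed simp

lemma tmap_ext:
  fixes H :: "('k::field,'b::finite) hopf"
  assumes en: "endo H R n f" and nk: "n \<le> k"
  shows "tmap H k t (ext_id f n (k - n) y) = ext_id f n (Suc k - n) (tmap H k t y)"
proof
  fix v :: "'b list"
  have fl: "lin_on (tpow n) (tpow n) f" by (rule endo_lin[OF en])
  show "tmap H k t (ext_id f n (k - n) y) v = ext_id f n (Suc k - n) (tmap H k t y) v"
  proof (cases "length v = Suc k")
    case False then show ?thesis using nk by (simp add: tmap_def ext_id_def)
  next
    case True
    have l1: "length (take k v) = n + (k - n)" using True nk by simp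
    have "tmap H k t (ext_id f n (k - n) y) v = t (v!k) * f (\<lambda>u. if length u = n then y (u @ drop n (take k v)) else 0) (take n v)"
      unfolding tmap_def using True nk by (simp add: ext_id_app[OF l1] min_def)
    also have "\<dots> = f (\<lambda>u. if length u = n then t (v!k) * y (u @ drop n (take k v)) else 0) (take n v)"
      unfolding f_scale_tail[OF fl] ..
    also have "\<dots> = ext_id f n (Suc k - n) (tmap H k t y) v"
    proof -
      have "(\<lambda>u. if length u = n then t (v!k) * y (u @ drop n (take k v)) else 0)
          = (\<lambda>u. if length u = n then tmap H k t y (u @ drop n v) else 0)"
      proof (rule ext)
        fix u :: "'b list"
        show "(if length u = n then t (v!k) * y (u @ drop n (take k v)) else 0) = (if length u = n then tmap H k t y (u @ drop n v) else 0)"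
        proof (cases "length u = n")
          case True2: True
          have a: "take k (u @ drop n v) = u @ drop n (take k v)" using True2 nk by (simp add: take_drop)
          have b: "(u @ drop n v) ! k = v ! k" using True2 nk True by (auto simp: nth_append)
          show ?thesis using True2 True nk unfolding tmap_def a b by (simp add: mult.commute)
        qed simp
      qed
      then show ?thesis using True nk by (simp add: ext_id_def)
    qed
    finally show ?thesis .
  qed
qed

lemma epsl_tmap:
  assumes t: "heps H t = 1" and y: "y \<in> tpow k"
  shows "epsl H k (tmap H k t y) = y"
proof
  fix v :: "'b list"
  show "epsl H k (tmap H k t y) v = y v"
  proof (cases "length v = k")
    case True
    then show ?thesis using t unfolding epsl_def tmap_def heps_def
      by (simp add: nth_append mult.assoc flip: sum_distrib_left)
  qed (use y in \<open>simp add: epsl_def tpow_def\<close>)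
qed

lemma qker_last:
  fixes A :: "'b::finite list \<Rightarrow> 'k::field"
  assumes A: "A \<in> tpow k" and B: "B \<in> Rplus_H H R"
  shows "(\<lambda>v. if length v = Suc k then A (take k v) * B (v!k) else 0) \<in> qker H R (Suc k)"
proof (rule qker_slice[where i=k])
  fix v :: "'b list" assume v: "length v = Suc k"
  have "(\<lambda>a. (\<lambda>v. if length v = Suc k then A (take k v) * B (v!k) else 0) (v[k:=a])) = (\<lambda>a. A (take k v) * B a)"
    using v by (auto simp: fun_eq_iff)
  then show "(\<lambda>a. (\<lambda>v. if length v = Suc k then A (take k v) * B (v!k) else 0) (v[k:=a])) \<in> Rplus_H H R"
    using subspace_scale[OF Rplus_subspace B] by simp
qed (simp_all add: tpow_def)

lemma move_z: "(\<Sum>c\<in>A. f c * (\<Sum>w\<in>B. g c w * (\<Sum>x\<in>X. \<Sum>z\<in>Z. F c w x z)))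
   = (\<Sum>z\<in>Z. \<Sum>c\<in>A. f c * (\<Sum>w\<in>B. g c w * (\<Sum>x\<in>X. (F c w x z :: 'k::comm_semiring_1))))"
proof -
  have "(\<Sum>c\<in>A. f c * (\<Sum>w\<in>B. g c w * (\<Sum>x\<in>X. \<Sum>z\<in>Z. F c w x z)))
      = (\<Sum>c\<in>A. \<Sum>w\<in>B. \<Sum>x\<in>X. \<Sum>z\<in>Z. f c * (g c w * F c w x z))" by (simp add: sum_distrib_left)
  also have "\<dots> = (\<Sum>c\<in>A. \<Sum>w\<in>B. \<Sum>z\<in>Z. \<Sum>x\<in>X. f c * (g c w * F c w x z))"
    by (rule sum.cong[OF refl], rule sum.cong[OF refl], rule sum.swap)
  also have "\<dots> = (\<Sum>c\<in>A. \<Sum>z\<in>Z. \<Sum>w\<in>B. \<Sum>x\<in>X. f c * (g c w * F c w x z))"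
    by (rule sum.cong[OF refl], rule sum.swap)
  also have "\<dots> = (\<Sum>z\<in>Z. \<Sum>c\<in>A. \<Sum>w\<in>B. \<Sum>x\<in>X. f c * (g c w * F c w x z))"
    by (rule sum.swap)
  also have "\<dots> = (\<Sum>z\<in>Z. \<Sum>c\<in>A. f c * (\<Sum>w\<in>B. g c w * (\<Sum>x\<in>X. F c w x z)))" by (simp add: sum_distrib_left)
  finally show ?thesis .
qed

lemma Tm_counit:
  assumes HA: "hopf_algebra H"
  shows "Tm H k c w v = (\<Sum>x\<in>UNIV. \<Sum>z\<in>UNIV. hd H c x z * Tm H k x w v * he H z)"
proof -
  have "(\<Sum>x\<in>UNIV. \<Sum>z\<in>UNIV. hd H c x z * Tm H k x w v * he H z) = (\<Sum>x\<in>UNIV. (\<Sum>z\<in>UNIV. hd H c x z * he H z) * Tm H k x w v)"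
    by (simp add: sum_distrib_right sum_distrib_left, simp add: mult_ac)
  then show ?thesis by (simp add: ax_counitR[OF HA])
qed



lemma tmap_tact:
  fixes H :: "('k::field,'b::finite) hopf"
  assumes HA: "hopf_algebra H" and tK: "\<And>h. vsub (hmul H t h) (vscale (heps H h) t) \<in> Rplus_H H R"
  shows "vsub (tmap H k t (tact H k y h)) (tact H (Suc k) (tmap H k t y) h) \<in> qker H R (Suc k)"
proof -
  define C where "C v0 z = (\<Sum>c\<in>UNIV. h c * (\<Sum>w\<in>words k. y w * (\<Sum>x\<in>UNIV. hd H c x z * Tm H k x w v0)))" for v0 z
  define A where "A z = (\<lambda>v0. if length v0 = k then C v0 z else 0)" for z
  define S where "S z d = (\<Sum>d'\<in>UNIV. t d' * hm H d' z d)" for z d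
  define B where "B z = (\<lambda>d. t d * he H z - S z d)" for z
  have E1: "tmap H k t (tact H k y h) v = (\<Sum>z\<in>UNIV. C (take k v) z * (he H z * t (v!k)))"
    if v: "length v = Suc k" for v
  proof -
    define v0 d where "v0 = take k v" and "d = v!k"
    have lv0: "length v0 = k" using v by (simp add: v0_def)
    have "tmap H k t (tact H k y h) v = (\<Sum>c\<in>UNIV. h c * (\<Sum>w\<in>words k. y w * Tm H k c w v0)) * t d"
      unfolding tmap_def using v lv0 by (simp add: tact_Tm v0_def d_def)
    also have "\<dots> = (\<Sum>c\<in>UNIV. h c * (\<Sum>w\<in>words k. y w * (\<Sum>x\<in>UNIV. \<Sum>z\<in>UNIV. hd H c x z * Tm H k x w v0 * (he H z * t d))))"
      by (subst Tm_counit[OF HA], simp add: sum_distrib_left sum_distrib_right, simp add: mult_ac)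
    also have "\<dots> = (\<Sum>z\<in>UNIV. \<Sum>c\<in>UNIV. h c * (\<Sum>w\<in>words k. y w * (\<Sum>x\<in>UNIV. hd H c x z * Tm H k x w v0 * (he H z * t d))))"
      by (rule move_z)
    also have "\<dots> = (\<Sum>z\<in>UNIV. C v0 z * (he H z * t d))"
      unfolding C_def by (simp add: sum_distrib_left sum_distrib_right, simp add: mult_ac)
    finally show ?thesis by (simp add: v0_def d_def)
  qed
  have E2: "tact H (Suc k) (tmap H k t y) h v = (\<Sum>z\<in>UNIV. C (take k v) z * S z (v!k))"
    if v: "length v = Suc k" for v
  proof -
    define v0 d where "v0 = take k v" and "d = v!k"
    have lv0: "length v0 = k" using v by (simp add: v0_def)
    have vv: "v = v0 @ [d]" using split1[OF v] by (simp add: v0_def d_def)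
    have tm: "tmap H k t y (w @ [d']) = y w * t d'" if "w \<in> words k" for w :: "'b list" and d'
      using that by (simp add: tmap_def words_def nth_append)
    have "tact H (Suc k) (tmap H k t y) h v = (\<Sum>c\<in>UNIV. h c * (\<Sum>w\<in>words k. \<Sum>d'\<in>UNIV. tmap H k t y (w @ [d']) * Tm H (Suc k) c (w @ [d']) (v0 @ [d])))"
      using v by (simp add: tact_Tm sum_words_snoc vv)
    also have "\<dots> = (\<Sum>c\<in>UNIV. h c * (\<Sum>w\<in>words k. y w * (\<Sum>x\<in>UNIV. \<Sum>z\<in>UNIV. hd H c x z * Tm H k x w v0 * S z d)))"
    proof (rule sum.cong[OF refl], rule arg_cong[where f="\<lambda>x. _ * x"], rule sum.cong[OF refl])
      fix c and w :: "'b list" assume w: "w \<in> words k"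
      have lw: "length w = k" using w by (simp add: words_def)
      have "(\<Sum>d'\<in>UNIV. tmap H k t y (w @ [d']) * Tm H (Suc k) c (w @ [d']) (v0 @ [d]))
          = (\<Sum>d'\<in>UNIV. \<Sum>x\<in>UNIV. \<Sum>z\<in>UNIV. y w * (hd H c x z * Tm H k x w v0 * (t d' * hm H d' z d)))"
        unfolding tm[OF w] Tm_snoc1[OF HA lw lv0] by (simp add: sum_distrib_left, simp add: mult_ac)
      also have "\<dots> = (\<Sum>x\<in>UNIV. \<Sum>z\<in>UNIV. \<Sum>d'\<in>UNIV. y w * (hd H c x z * Tm H k x w v0 * (t d' * hm H d' z d)))"
        by (rule sum3_p3)
      also have "\<dots> = y w * (\<Sum>x\<in>UNIV. \<Sum>z\<in>UNIV. hd H c x z * Tm H k x w v0 * S z d)"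
        unfolding S_def by (simp add: sum_distrib_left)
      finally show "(\<Sum>d'\<in>UNIV. tmap H k t y (w @ [d']) * Tm H (Suc k) c (w @ [d']) (v0 @ [d]))
          = y w * (\<Sum>x\<in>UNIV. \<Sum>z\<in>UNIV. hd H c x z * Tm H k x w v0 * S z d)" .
    qed
    also have "\<dots> = (\<Sum>z\<in>UNIV. \<Sum>c\<in>UNIV. h c * (\<Sum>w\<in>words k. y w * (\<Sum>x\<in>UNIV. hd H c x z * Tm H k x w v0 * S z d)))"
      by (rule move_z)
    also have "\<dots> = (\<Sum>z\<in>UNIV. C v0 z * S z d)"
      unfolding C_def by (simp add: sum_distrib_left sum_distrib_right, simp add: mult_ac)
    finally show ?thesis by (simp add: v0_def d_def)
  qed
  have eq: "vsub (tmap H k t (tact H k y h)) (tact H (Suc k) (tmap H k t y) h)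
      = (\<lambda>v. \<Sum>z\<in>UNIV. (\<lambda>v. if length v = Suc k then A z (take k v) * B z (v!k) else 0) v)"
  proof
    fix v :: "'b list"
    show "vsub (tmap H k t (tact H k y h)) (tact H (Suc k) (tmap H k t y) h) v
       = (\<Sum>z\<in>UNIV. (\<lambda>v. if length v = Suc k then A z (take k v) * B z (v!k) else 0) v)"
    proof (cases "length v = Suc k")
      case True
      then show ?thesis unfolding vsub_def E1[OF True] E2[OF True] A_def B_def
        by (simp add: sum_subtractf[symmetric] algebra_simps)
    qed (simp add: vsub_def tmap_def tact_def)
  qed
  have BK: "B z \<in> Rplus_H H R" for z
  proof -
    have "vsub (hmul H t (\<lambda>b. kd z b)) (vscale (heps H (\<lambda>b. kd z b)) t) \<in> Rplus_H H R" by (rule tK)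
    moreover have "vsub (hmul H t (\<lambda>b. kd z b)) (vscale (heps H (\<lambda>b. kd z b)) t) = (\<lambda>d. S z d - he H z * t d)"
      unfolding delta_vec S_def vsub_def vscale_def heps_def by simp
    ultimately have m: "(\<lambda>d. S z d - he H z * t d) \<in> Rplus_H H R" by simp
    have "(\<lambda>d. (-1) * (S z d - he H z * t d)) \<in> Rplus_H H R" by (rule subspace_scale[OF Rplus_subspace m])
    moreover have "(\<lambda>d. (-1) * (S z d - he H z * t d)) = B z" by (auto simp: B_def fun_eq_iff algebra_simps)
    ultimately show ?thesis by simp
  qed
  have AT: "A z \<in> tpow k" for z by (simp add: A_def tpow_def)
  show ?thesis unfolding eq
    by (rule subspace_sum[OF qker_subspace finite_UNIV]) (rule qker_last[OF AT BK])
qed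

lemma summand_t:
  fixes H :: "('k::field,'b::finite) hopf"
  assumes HA: "hopf_algebra H" and SS: "semisimple_ext H R" and nk: "n \<le> k"
  shows "bimod_summand H R n k (Suc k)"
proof -
  obtain t where tK: "\<And>h. vsub (hmul H t h) (vscale (heps H h) t) \<in> Rplus_H H R" and t1: "heps H t = 1"
    using SS unfolding semisimple_ext_def by blast
  show ?thesis
    unfolding bimod_summand_def
  proof (intro exI conjI ballI)
    show "bimap H R n k (Suc k) (tmap H k t)"
      unfolding bimap_def
      using tmap_lin_tpow tmap_qker tmap_tact[OF HA tK] nk
      by (auto simp: subspace_zero[OF qker_subspace] tmap_ext[OF _ nk])
    show "bimap H R n (Suc k) k (epsl H k)"
      unfolding bimap_def
      using epsl_lin_tpow epsl_qker[OF HA] epsl_tact[OF HA] nk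
      by (auto simp: subspace_zero[OF qker_subspace] epsl_ext[OF _ nk])
    fix x :: "'b list \<Rightarrow> 'k" assume "x \<in> tpow k"
    then show "vsub (epsl H k (tmap H k t x)) x \<in> qker H R k"
      by (simp add: epsl_tmap[OF t1] subspace_zero[OF qker_subspace])
  qed
qed

lemma chain_dup:
  assumes HA: "hopf_algebra H" and HR: "hopf_subalgebra H R"
  shows "bimod_summand H R n (Suc n) (Suc n + m)"
proof (induction m)
  case 0 then show ?case by (simp add: summand_refl)
next
  case (Suc m)
  have "bimod_summand H R n (Suc (n + m)) (Suc (Suc (n + m)))" by (rule summand_dup[OF HA HR]) simp
  then show ?case using summand_trans[OF Suc.IH] by simp
qed

lemma chain_t:
  assumes HA: "hopf_algebra H" and SS: "semisimple_ext H R"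
  shows "bimod_summand H R n n (n + m)"
proof (induction m)
  case 0 then show ?case by (simp add: summand_refl)
next
  case (Suc m)
  have "bimod_summand H R n (n + m) (Suc (n + m))" by (rule summand_t[OF HA SS]) simp
  then show ?case using summand_trans[OF Suc.IH] by simp
qed

theorem mainTheorem14:
  fixes H :: "('k::field, 'b::finite) hopf" and R :: "('b \<Rightarrow> 'k) set"
  assumes "hopf_algebra H" and "hopf_subalgebra H R"
  shows "(\<forall>n. bimod_summand H R n (n + 1) (n + 2)) \<and>
         (\<forall>n m. n + 1 \<ge> 2 \<and> m \<ge> n + 1 \<longrightarrow> bimod_summand H R n (n + 1) (n + m)) \<and>
         (semisimple_ext H R \<longrightarrow> (\<forall>n m. m \<ge> n \<longrightarrow> bimod_summand H R n n (n + m)))"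
proof (intro conjI allI impI)
  fix n
  show "bimod_summand H R n (n + 1) (n + 2)"
    using summand_dup[OF assms, of n n] by (simp add: numeral_2_eq_2)
next
  fix n m :: nat assume nm: "n + 1 \<ge> 2 \<and> m \<ge> n + 1"
  then obtain m' where m: "m = Suc m'" by (cases m) auto
  show "bimod_summand H R n (n + 1) (n + m)"
    using chain_dup[OF assms, of n m'] m by simp
next
  fix n m :: nat assume "semisimple_ext H R" "m \<ge> n"
  then show "bimod_summand H R n n (n + m)" using chain_t[OF assms(1)] by blast
qed


end
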